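(* For all $n\ge 1$, the descent polynomial $X_n(t):=\sum_{\sigma\in\mathcal{X}_{2n}} t^{\mathrm{des}(\sigma)}$ can be expanded as \[ X_n(t)=\sum_{j=0}^{\lfloor n/2\rfloor} \gamma_{n,j}\, t^j(1+t)^{n-2j}, \] where $\gamma_{n,j}$ is the number of primary even-odd-descent permutations in $\mathcal{X}_{2n}$ with $j$ descents. Moreover, setting $\gamma_{0,0}=1$, the generating function of the $\gamma_{n,j}$ has the continued fraction expansion \[ \sum_{n\ge 0}\Big(\sum_{j=0}^{\lfloor n/2\rfloor} \gamma_{n,j} t^j \Big)x^n=\cfrac{1}{1-\mu_0 x-\cfrac{\lambda_1 x^2}{1-\mu_1 x-\cfrac{\lambda_2 x^2}{1-\mu_2 x-\cdots}}}, \] where $\mu_h=(h+1)^2$ for $h\ge 0$ and $\lambda_h=h^2(h+1)^2 t$ for $h\ge 1$.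
   Context: $\mathfrak{S}_n$ is the set of permutations of $[n]=\{1,\dots,n\}$, written $\sigma=\sigma_1\cdots\sigma_n$. A descent of $\sigma$ is an index $i\in[n-1]$ with $\sigma_i>\sigma_{i+1}$; $\sigma_i$ is then a descent top, $\sigma_{i+1}$ a descent bottom, and $(\sigma_i,\sigma_{i+1})$ a descent pair; $\mathrm{des}(\sigma)$ is the number of descents. A descent pair is even-odd if $\sigma_i$ is even and $\sigma_{i+1}$ is odd. $\mathcal{X}_{m}$ is the set of $\sigma\in\mathfrak{S}_m$ all of whose descent pairs are even-odd. A permutation $\sigma\in\mathcal{X}_{2n}$ with descent tops $\{t_1,\dots,t_k\}$ and descent bottoms $\{b_1,\dots,b_k\}$ ($k\ge0$) is a primary even-odd-descent permutation if for all $i,j$: $t_i>b_j$ implies $t_i-b_j\ge 3$. *)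

theory Defs
  imports "HOL-Computational_Algebra.Computational_Algebra"
begin

text \<open>Permutations of [m] = {1..m} in one-line notation, as lists (0-indexed positions).\<close>
definition perms :: "nat \<Rightarrow> nat list set" where
  "perms m = {xs. distinct xs \<and> set xs = {1..m}}"

definition descents :: "nat list \<Rightarrow> nat set" where
  "descents xs = {i. Suc i < length xs \<and> xs ! i > xs ! Suc i}"

definition des :: "nat list \<Rightarrow> nat" where
  "des xs = card (descents xs)"

definition descent_tops :: "nat list \<Rightarrow> nat set" where
  "descent_tops xs = (\<lambda>i. xs ! i) ` descents xs"

definition descent_bottoms :: "nat list \<Rightarrow> nat set" where
  "descent_bottoms xs = (\<lambda>i. xs ! Suc i) ` descents xs"

definition XX :: "nat \<Rightarrow> nat list set" where
  "XX m = {xs \<in> perms m. \<forall>i \<in> descents xs. even (xs ! i) \<and> odd (xs ! Suc i)}"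

definition primary :: "nat list \<Rightarrow> bool" where
  "primary xs \<longleftrightarrow> (\<forall>t \<in> descent_tops xs. \<forall>b \<in> descent_bottoms xs. t > b \<longrightarrow> t - b \<ge> 3)"

definition gamma :: "nat \<Rightarrow> nat \<Rightarrow> nat" where
  "gamma n j = card {xs \<in> XX (2 * n). primary xs \<and> des xs = j}"

definition Xpoly :: "nat \<Rightarrow> int poly" where
  "Xpoly n = (\<Sum>xs \<in> XX (2 * n). monom 1 (des xs))"

definition mu :: "nat \<Rightarrow> real" where
  "mu h = real ((h + 1)^2)"

definition lam :: "real \<Rightarrow> nat \<Rightarrow> real" where
  "lam t h = real (h^2 * (h + 1)^2) * t"

text \<open>Convergents of the J-fraction (t fixed real): jconv t h k is the depth-k truncation
  1/(1 - mu_h x - lam_{h+1} x^2/(1 - mu_{h+1} x - ...)) with the tail beyond depth k replaced by 0.\<close>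
fun jconv :: "real \<Rightarrow> nat \<Rightarrow> nat \<Rightarrow> real fps" where
  "jconv t h 0 = 0"
| "jconv t h (Suc k) =
     inverse (1 - fps_const (mu h) * fps_X - fps_const (lam t (Suc h)) * fps_X ^ 2 * jconv t (Suc h) k)"

end

theory Submission
  imports Defs
begin

fun good :: "nat list \<Rightarrow> bool" where
  "good (a # b # r) = ((b < a \<longrightarrow> even a \<and> odd b) \<and> good (b # r))"
| "good _ = True"

fun dc :: "nat list \<Rightarrow> nat" where
  "dc (a # b # r) = (if b < a then 1 else 0) + dc (b # r)"
| "dc _ = 0"

definition adj :: "nat list \<Rightarrow> (nat \<times> nat) set" where
  "adj s = set (zip s (tl s))"

lemma adj_Nil[simp]: "adj [] = {}" by (simp add: adj_def)
lemma adj_single[simp]: "adj [a] = {}" by (simp add: adj_def)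
lemma adj_Cons2[simp]: "adj (a # b # r) = insert (a, b) (adj (b # r))" by (simp add: adj_def)

lemma adj_append: "adj (xs @ ys) = adj xs \<union> adj ys \<union> (if xs \<noteq> [] \<and> ys \<noteq> [] then {(last xs, hd ys)} else {})"
proof (induction xs rule: induct_list012)
  case 1 then show ?case by simp
next
  case (2 x) then show ?case by (cases ys) auto
next
  case (3 x y zs) then show ?case by auto
qed

lemma good_append: "good (xs @ ys) \<longleftrightarrow> good xs \<and> good ys \<and> (xs \<noteq> [] \<and> ys \<noteq> [] \<longrightarrow> hd ys < last xs \<longrightarrow> even (last xs) \<and> odd (hd ys))"
proof (induction xs rule: induct_list012)
  case 1 then show ?case by simp
next
  case (2 x) then show ?case by (cases ys) auto
next
  case (3 x y zs) then show ?case by auto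
qed

lemma dc_append: "dc (xs @ ys) = dc xs + dc ys + (if xs \<noteq> [] \<and> ys \<noteq> [] \<and> hd ys < last xs then 1 else 0)"
proof (induction xs rule: induct_list012)
  case 1 then show ?case by simp
next
  case (2 x) then show ?case by (cases ys) auto
next
  case (3 x y zs) then show ?case by auto
qed

definition tops :: "nat list \<Rightarrow> nat set" where
  "tops s = {a. \<exists>b. (a, b) \<in> adj s \<and> b < a}"
definition bots :: "nat list \<Rightarrow> nat set" where
  "bots s = {b. \<exists>a. (a, b) \<in> adj s \<and> b < a}"

lemma tops_append: "tops (xs @ ys) = tops xs \<union> tops ys \<union> (if xs \<noteq> [] \<and> ys \<noteq> [] \<and> hd ys < last xs then {last xs} else {})"
  unfolding tops_def adj_append by auto
lemma bots_append: "bots (xs @ ys) = bots xs \<union> bots ys \<union> (if xs \<noteq> [] \<and> ys \<noteq> [] \<and> hd ys < last xs then {hd ys} else {})"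
  unfolding bots_def adj_append by auto
lemma tops_single[simp]: "tops [a] = {}" by (simp add: tops_def)
lemma bots_single[simp]: "bots [a] = {}" by (simp add: bots_def)
lemma tops_Nil[simp]: "tops [] = {}" by (simp add: tops_def)
lemma bots_Nil[simp]: "bots [] = {}" by (simp add: bots_def)

lemma adj_subset: "(a,b) \<in> adj s \<Longrightarrow> a \<in> set s \<and> b \<in> set s"
  unfolding adj_def by (metis in_set_zipE list.sel(2) list.set_sel(2))

lemma tops_subset: "tops s \<subseteq> set s" unfolding tops_def using adj_subset by blast
lemma bots_subset: "bots s \<subseteq> set s" unfolding bots_def using adj_subset by blast


definition tailok :: "nat list list \<Rightarrow> bool" where
  "tailok Q \<longleftrightarrow> (\<forall>s\<in>set Q. s \<noteq> [] \<and> odd (hd s))"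

lemma tailok_Nil[simp]: "tailok []" by (simp add: tailok_def)

definition valid :: "nat \<Rightarrow> nat list list \<Rightarrow> bool" where
  "valid m Q \<longleftrightarrow> Q \<noteq> [] \<and> distinct (concat Q) \<and> set (concat Q) = {1..m}
      \<and> (\<forall>s\<in>set Q. good s) \<and> tailok (tl Q)"

definition LL :: "nat \<Rightarrow> nat list list set" where
  "LL m = {Q. valid m Q}"

fun insO :: "nat \<Rightarrow> nat list list \<Rightarrow> nat \<times> bool \<Rightarrow> nat list list" where
  "insO v [] c = []"
| "insO v (s # Q) (0, False) = (s @ [v]) # Q"
| "insO v (s # Q) (0, True) = s # [v] # Q"
| "insO v (s # Q) (Suc i, b) = s # insO v Q (i, b)"

fun insE :: "nat \<Rightarrow> nat list list \<Rightarrow> nat \<times> bool \<Rightarrow> nat list list" where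
  "insE v [] c = []"
| "insE v (s # Q) (0, False) = (s @ [v]) # Q"
| "insE v [s] (0, True) = [s]"
| "insE v (s # t # Q) (0, True) = (s @ v # t) # Q"
| "insE v (s # Q) (Suc i, b) = s # insE v Q (i, b)"

definition CO :: "nat list list \<Rightarrow> (nat \<times> bool) set" where
  "CO Q = {(i, b). i < length Q}"
definition CE :: "nat list list \<Rightarrow> (nat \<times> bool) set" where
  "CE Q = {(i, b). if b then Suc i < length Q else i < length Q}"

lemma insO_split: "i < length Q \<Longrightarrow> \<exists>xs ys. concat Q = xs @ ys \<and> concat (insO v Q (i, b)) = xs @ v # ys"
proof (induction Q arbitrary: i)
  case Nil then show ?case by simp
next
  case (Cons s Q)
  show ?case
  proof (cases i)
    case 0 then show ?thesis by (cases b) auto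
  next
    case (Suc j)
    have "j < length Q" using Cons.prems Suc by simp
    then obtain xs ys where "concat Q = xs @ ys" "concat (insO v Q (j, b)) = xs @ v # ys" using Cons.IH by blast
    then show ?thesis using Suc by (intro exI[of _ "s @ xs"] exI[of _ ys]) auto
  qed
qed

lemma insE_split: "(if c then Suc i < length Q else i < length Q) \<Longrightarrow> \<exists>xs ys. concat Q = xs @ ys \<and> concat (insE v Q (i, c)) = xs @ v # ys"
proof (induction Q arbitrary: i)
  case Nil then show ?case by (simp split: if_splits)
next
  case (Cons s Q)
  show ?case
  proof (cases i)
    case 0 then show ?thesis using Cons.prems by (cases c; cases Q) auto
  next
    case (Suc j)
    have "if c then Suc j < length Q else j < length Q" using Cons.prems Suc by (simp split: if_splits)
    then obtain xs ys where "concat Q = xs @ ys" "concat (insE v Q (j, c)) = xs @ v # ys" using Cons.IH by blast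
    then show ?thesis using Suc by (intro exI[of _ "s @ xs"] exI[of _ ys]) auto
  qed
qed

lemma length_insO: "i < length Q \<Longrightarrow> length (insO v Q (i, b)) = length Q + (if b then 1 else 0)"
proof (induction Q arbitrary: i)
  case Nil then show ?case by simp
next
  case (Cons s Q) then show ?case by (cases i; cases b) auto
qed


lemma length_insE: "(if c then Suc i < length Q else i < length Q) \<Longrightarrow> length (insE v Q (i, c)) = length Q - (if c then 1 else 0)"
proof (induction Q arbitrary: i)
  case Nil then show ?case by (simp split: if_splits)
next
  case (Cons s Q) then show ?case by (cases i; cases c; cases Q) (auto split: if_splits)
qed

lemma good_snoc: "good s \<Longrightarrow> (\<forall>x\<in>set s. x < v) \<Longrightarrow> good (s @ [v])"
proof -
  assume a: "good s" "\<forall>x\<in>set s. x < v"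
  have "s \<noteq> [] \<Longrightarrow> last s < v" using a(2) last_in_set[of s] by blast
  then show ?thesis using a(1) by (auto simp: good_append)
qed

lemma good_merge: "good s \<Longrightarrow> good t \<Longrightarrow> (\<forall>x\<in>set s. x < v) \<Longrightarrow> t \<noteq> [] \<Longrightarrow> hd t < v \<Longrightarrow> odd (hd t) \<Longrightarrow> even v \<Longrightarrow> good (s @ v # t)"
proof -
  assume a: "good s" "good t" "\<forall>x\<in>set s. x < v" "t \<noteq> []" "hd t < v" "odd (hd t)" "even v"
  have "s \<noteq> [] \<Longrightarrow> last s < v" using a(3) last_in_set[of s] by blast
  moreover have "good (v # t)" using good_append[of "[v]" t] a by simp
  ultimately show ?thesis using a(1) good_append[of s "v # t"] by auto
qed

lemma good_insO: "\<forall>s\<in>set Q. good s \<Longrightarrow> \<forall>x\<in>set (concat Q). x < v \<Longrightarrow> \<forall>s\<in>set (insO v Q (i, b)). good s"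
proof (induction Q arbitrary: i)
  case Nil then show ?case by simp
next
  case (Cons s Q) then show ?case by (cases i; cases b) (auto intro: good_snoc)
qed

lemma good_insE: "\<forall>s\<in>set Q. good s \<Longrightarrow> \<forall>x\<in>set (concat Q). x < v \<Longrightarrow> tailok (tl Q) \<Longrightarrow> even v
   \<Longrightarrow> \<forall>s\<in>set (insE v Q (i, c)). good s"
proof (induction Q arbitrary: i)
  case Nil then show ?case by simp
next
  case (Cons s Q)
  have tq: "tailok (tl Q)" using Cons.prems(3) by (cases Q) (auto simp: tailok_def)
  show ?case
  proof (cases i)
    case 0
    then show ?thesis
    proof (cases c)
      case True
      then show ?thesis using Cons.prems 0
        by (cases Q) (auto simp: tailok_def intro!: good_merge)
    next
      case False then show ?thesis using Cons.prems 0 by (auto intro: good_snoc)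
    qed
  next
    case (Suc j) then show ?thesis using Cons.IH[OF _ _ tq] Cons.prems by auto
  qed
qed

lemma tailok_insO: "tailok Q \<Longrightarrow> odd v \<Longrightarrow> tailok (insO v Q (i, b))"
proof (induction Q arbitrary: i)
  case Nil then show ?case by simp
next
  case (Cons s Q)
  have s: "s \<noteq> [] \<and> odd (hd s)" and q: "tailok Q" using Cons.prems by (auto simp: tailok_def)
  show ?case
  proof (cases i)
    case 0 then show ?thesis using s q Cons.prems by (cases b) (simp_all add: tailok_def)
  next
    case (Suc j) then show ?thesis using s Cons.IH[OF q Cons.prems(2)] by (simp add: tailok_def)
  qed
qed

lemma tailok_tl_insO: "tailok (tl Q) \<Longrightarrow> odd v \<Longrightarrow> tailok (tl (insO v Q (i, b)))"
proof (cases Q)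
  case Nil then show ?thesis by simp
next
  case (Cons s Q')
  assume a: "tailok (tl Q)" "odd v"
  show ?thesis
  proof (cases i)
    case 0 then show ?thesis using a Cons by (cases b) (auto simp: tailok_def)
  next
    case (Suc j) then show ?thesis using a Cons tailok_insO[of Q' v j b] by simp
  qed
qed

lemma tailok_insE: "tailok Q \<Longrightarrow> tailok (insE v Q (i, c))"
proof (induction Q arbitrary: i)
  case Nil then show ?case by simp
next
  case (Cons s Q)
  have s: "s \<noteq> [] \<and> odd (hd s)" and q: "tailok Q" using Cons.prems by (auto simp: tailok_def)
  show ?case
  proof (cases i)
    case 0 then show ?thesis using s q by (cases c; cases Q) (simp_all add: tailok_def)
  next
    case (Suc j) then show ?thesis using s Cons.IH[OF q] by (simp add: tailok_def)
  qed
qed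

lemma tailok_tl_insE: "tailok (tl Q) \<Longrightarrow> tailok (tl (insE v Q (i, c)))"
proof (cases Q)
  case Nil then show ?thesis by simp
next
  case (Cons s Q')
  assume a: "tailok (tl Q)"
  show ?thesis
  proof (cases i)
    case 0 then show ?thesis using a Cons by (cases c; cases Q') (auto simp: tailok_def)
  next
    case (Suc j) then show ?thesis using a Cons tailok_insE[of Q' v j c] by simp
  qed
qed

definition desQ :: "nat list list \<Rightarrow> nat" where
  "desQ Q = sum_list (map dc Q)"

lemma dc_snoc: "\<forall>x\<in>set s. x < v \<Longrightarrow> dc (s @ [v]) = dc s"
proof -
  assume a: "\<forall>x\<in>set s. x < v"
  have "s \<noteq> [] \<Longrightarrow> last s < v" using a last_in_set[of s] by blast
  then show ?thesis by (auto simp: dc_append)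
qed

lemma dc_merge: "\<forall>x\<in>set s. x < v \<Longrightarrow> t \<noteq> [] \<Longrightarrow> hd t < v \<Longrightarrow> dc (s @ v # t) = dc s + 1 + dc t"
proof -
  assume a: "\<forall>x\<in>set s. x < v" "t \<noteq> []" "hd t < v"
  have "s \<noteq> [] \<Longrightarrow> last s < v" using a last_in_set[of s] by blast
  moreover have "dc (v # t) = dc t + 1" using dc_append[of "[v]" t] a by simp
  ultimately show ?thesis using dc_append[of s "v # t"] by auto
qed

lemma desQ_insO: "\<forall>x\<in>set (concat Q). x < v \<Longrightarrow> desQ (insO v Q (i, b)) = desQ Q"
proof (induction Q arbitrary: i)
  case Nil then show ?case by simp
next
  case (Cons s Q) then show ?case by (cases i; cases b) (auto simp: desQ_def dc_snoc)
qed

lemma desQ_insE: "\<forall>x\<in>set (concat Q). x < v \<Longrightarrow> tailok (tl Q) \<Longrightarrow> (if c then Suc i < length Q else i < length Q)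
   \<Longrightarrow> desQ (insE v Q (i, c)) = desQ Q + (if c then 1 else 0)"
proof (induction Q arbitrary: i)
  case Nil then show ?case by (simp split: if_splits)
next
  case (Cons s Q)
  have tq: "tailok (tl Q)" using Cons.prems(2) by (cases Q) (auto simp: tailok_def)
  show ?case
  proof (cases i)
    case 0
    then show ?thesis
    proof (cases c)
      case True
      then show ?thesis using Cons.prems 0
        by (cases Q) (auto simp: tailok_def desQ_def dc_merge)
    next
      case False then show ?thesis using Cons.prems 0 by (auto simp: desQ_def dc_snoc)
    qed
  next
    case (Suc j) then show ?thesis using Cons.IH[OF _ tq, of j] Cons.prems by (auto simp: desQ_def split: if_splits)
  qed
qed


definition topset :: "nat list list \<Rightarrow> nat set" where
  "topset Q = \<Union> (tops ` set Q)"

fun botset :: "nat list list \<Rightarrow> nat set" where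
  "botset [] = {}"
| "botset [s] = bots s"
| "botset (s # t # Q) = bots s \<union> {hd t} \<union> botset (t # Q)"

lemma botset_Cons: "botset (s # Q) = bots s \<union> botset Q \<union> (if Q = [] then {} else {hd (hd Q)})"
  by (cases Q) auto

lemma topset_Cons[simp]: "topset (s # Q) = tops s \<union> topset Q" by (simp add: topset_def)
lemma topset_Nil[simp]: "topset [] = {}" by (simp add: topset_def)

lemma last_lt: "\<forall>x\<in>set s. x < v \<Longrightarrow> s \<noteq> [] \<Longrightarrow> last s < v"
  using last_in_set by blast

lemma tops_snoc: assumes "\<forall>x\<in>set s. x < v" shows "tops (s @ [v]) = tops s"
proof -
  have "s \<noteq> [] \<longrightarrow> last s < v" using last_lt[OF assms] by blast
  then show ?thesis by (auto simp: tops_append)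
qed
lemma bots_snoc: assumes "\<forall>x\<in>set s. x < v" shows "bots (s @ [v]) = bots s"
proof -
  have "s \<noteq> [] \<longrightarrow> last s < v" using last_lt[OF assms] by blast
  then show ?thesis by (auto simp: bots_append)
qed
lemma tops_merge: assumes "\<forall>x\<in>set s. x < v" "t \<noteq> []" "hd t < v" shows "tops (s @ v # t) = tops s \<union> {v} \<union> tops t"
proof -
  show ?thesis
  proof (cases "s = []")
    case True then show ?thesis using tops_append[of "[v]" t] assms by auto
  next
    case False
    then have "\<not> v < last s" using last_lt[OF assms(1)] by fastforce
    then show ?thesis using tops_append[of s "v # t"] tops_append[of "[v]" t] assms False by auto
  qed
qed
lemma bots_merge: assumes "\<forall>x\<in>set s. x < v" "t \<noteq> []" "hd t < v" shows "bots (s @ v # t) = bots s \<union> {hd t} \<union> bots t"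
proof -
  show ?thesis
  proof (cases "s = []")
    case True then show ?thesis using bots_append[of "[v]" t] assms by auto
  next
    case False
    then have "\<not> v < last s" using last_lt[OF assms(1)] by fastforce
    then show ?thesis using bots_append[of s "v # t"] bots_append[of "[v]" t] assms False by auto
  qed
qed

lemma insO_Nil_iff: "i < length Q \<Longrightarrow> insO v Q (i, b) \<noteq> []"
  by (cases Q; cases i; cases b) auto

lemma insE_Nil_iff: "(if c then Suc i < length Q else i < length Q) \<Longrightarrow> insE v Q (i, c) \<noteq> []"
proof (cases Q)
  case (Cons s Q')
  assume a: "if c then Suc i < length Q else i < length Q"
  show ?thesis
  proof (cases i)
    case 0 then show ?thesis using Cons a by (cases c; cases Q') auto
  qed (use Cons in auto)
qed (simp split: if_splits)

lemma hd_insO: "Q \<noteq> [] \<Longrightarrow> hd Q \<noteq> [] \<Longrightarrow> hd (hd (insO v Q (i, b))) = hd (hd Q)"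
  by (cases Q; cases i; cases b) auto

lemma hd_insE: "Q \<noteq> [] \<Longrightarrow> hd Q \<noteq> [] \<Longrightarrow> hd (hd (insE v Q (i, c))) = hd (hd Q)"
proof (cases Q)
  case (Cons s Q')
  assume "hd Q \<noteq> []"
  then show ?thesis using Cons by (cases i; cases c; cases Q') auto
qed simp

lemma topset_insO: "\<forall>x\<in>set (concat Q). x < v \<Longrightarrow> topset (insO v Q (i, b)) = topset Q"
proof (induction Q arbitrary: i)
  case Nil then show ?case by simp
next
  case (Cons s Q) then show ?case by (cases i; cases b) (auto simp: tops_snoc)
qed

lemma botset_insO: "\<forall>x\<in>set (concat Q). x < v \<Longrightarrow> tailok (tl Q) \<Longrightarrow> i < length Q
   \<Longrightarrow> botset (insO v Q (i, b)) = botset Q \<union> (if b then {v} else {})"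
proof (induction Q arbitrary: i)
  case Nil then show ?case by simp
next
  case (Cons s Q)
  have tq: "tailok (tl Q)" using Cons.prems(2) by (cases Q) (auto simp: tailok_def)
  show ?case
  proof (cases i)
    case 0 then show ?thesis using Cons.prems
      by (cases b) (auto simp: botset_Cons bots_snoc)
  next
    case (Suc j)
    then have j: "j < length Q" using Cons.prems by simp
    then have "Q \<noteq> []" by auto
    moreover have "hd Q \<noteq> []" using Cons.prems(2) \<open>Q \<noteq> []\<close> by (cases Q) (auto simp: tailok_def)
    ultimately show ?thesis using Suc Cons.IH[OF _ tq j] Cons.prems hd_insO[of Q v j b] insO_Nil_iff[OF j]
      by (auto simp: botset_Cons)
  qed
qed

lemma topset_insE: "\<forall>x\<in>set (concat Q). x < v \<Longrightarrow> tailok (tl Q) \<Longrightarrow> (if c then Suc i < length Q else i < length Q)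
   \<Longrightarrow> topset (insE v Q (i, c)) = topset Q \<union> (if c then {v} else {})"
proof (induction Q arbitrary: i)
  case Nil then show ?case by (simp split: if_splits)
next
  case (Cons s Q)
  have tq: "tailok (tl Q)" using Cons.prems(2) by (cases Q) (auto simp: tailok_def)
  show ?case
  proof (cases i)
    case 0
    show ?thesis
    proof (cases c)
      case True
      then obtain t Q' where Q: "Q = t # Q'" using Cons.prems 0 by (cases Q) auto
      then have "t \<noteq> []" "hd t \<in> set t" using Cons.prems(2) by (auto simp: tailok_def)
      then show ?thesis using Cons.prems Q 0 True by (auto simp: tops_merge)
    next
      case False then show ?thesis using Cons.prems 0 by (auto simp: tops_snoc)
    qed
  next
    case (Suc j)
    then have j: "if c then Suc j < length Q else j < length Q" using Cons.prems by (simp split: if_splits)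
    show ?thesis using Suc Cons.IH[OF _ tq j] Cons.prems by auto
  qed
qed

lemma botset_insE: "\<forall>x\<in>set (concat Q). x < v \<Longrightarrow> tailok (tl Q) \<Longrightarrow> (if c then Suc i < length Q else i < length Q)
   \<Longrightarrow> botset (insE v Q (i, c)) = botset Q"
proof (induction Q arbitrary: i)
  case Nil then show ?case by (simp split: if_splits)
next
  case (Cons s Q)
  have tq: "tailok (tl Q)" using Cons.prems(2) by (cases Q) (auto simp: tailok_def)
  show ?case
  proof (cases i)
    case 0
    show ?thesis
    proof (cases c)
      case True
      then obtain t Q' where Q: "Q = t # Q'" using Cons.prems 0 by (cases Q) auto
      then have "t \<noteq> []" "hd t \<in> set t" using Cons.prems(2) by (auto simp: tailok_def)
      then show ?thesis using Cons.prems Q 0 True by (auto simp: bots_merge botset_Cons)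
    next
      case False then show ?thesis using Cons.prems 0 by (auto simp: bots_snoc botset_Cons)
    qed
  next
    case (Suc j)
    then have j: "if c then Suc j < length Q else j < length Q" using Cons.prems by (simp split: if_splits)
    then have "Q \<noteq> []" by (auto split: if_splits)
    moreover have "hd Q \<noteq> []" using Cons.prems(2) \<open>Q \<noteq> []\<close> by (cases Q) (auto simp: tailok_def)
    ultimately show ?thesis using Suc Cons.IH[OF _ tq j] Cons.prems hd_insE[of Q v j c] insE_Nil_iff[OF j]
      by (auto simp: botset_Cons)
  qed
qed

lemma topset_subset: "topset Q \<subseteq> set (concat Q)"
  unfolding topset_def using tops_subset by auto

lemma botset_subset: "tailok (tl Q) \<Longrightarrow> botset Q \<subseteq> set (concat Q)"
proof (induction Q)
  case Nil then show ?case by simp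
next
  case (Cons s Q)
  then have "tailok (tl Q)" by (cases Q) (auto simp: tailok_def)
  moreover have "Q \<noteq> [] \<Longrightarrow> hd Q \<noteq> []" using Cons.prems by (cases Q) (auto simp: tailok_def)
  moreover have "Q \<noteq> [] \<Longrightarrow> hd (hd Q) \<in> set (concat Q)"
    using calculation(2) by (cases Q) auto
  ultimately show ?case using Cons bots_subset[of s] by (auto simp: botset_Cons)
qed

definition pp :: "nat list list \<Rightarrow> bool" where
  "pp Q \<longleftrightarrow> (\<forall>b\<in>botset Q. Suc b \<notin> topset Q)"


lemma pp_insO:
  assumes "\<forall>x\<in>set (concat Q). x < v" "tailok (tl Q)" "i < length Q"
  shows "pp (insO v Q (i, b)) = pp Q"
proof -
  have "Suc v \<notin> topset Q" using topset_subset[of Q] assms(1) by fastforce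
  then show ?thesis unfolding pp_def using botset_insO[OF assms] topset_insO[OF assms(1)] by auto
qed

lemma pp_insE:
  assumes "\<forall>x\<in>set (concat Q). x < v" "tailok (tl Q)" "if c then Suc i < length Q else i < length Q" "0 < v"
  shows "pp (insE v Q (i, c)) = (pp Q \<and> \<not> (c \<and> v - 1 \<in> botset Q))"
proof -
  have nv: "v \<notin> topset Q" using topset_subset[of Q] assms(1) by fastforce
  have "pp (insE v Q (i, c)) = (\<forall>b\<in>botset Q. Suc b \<notin> topset Q \<union> (if c then {v} else {}))"
    unfolding pp_def using botset_insE[OF assms(1-3)] topset_insE[OF assms(1-3)] by simp
  also have "\<dots> = (pp Q \<and> \<not> (c \<and> v - 1 \<in> botset Q))"
  proof (cases c)
    case False then show ?thesis by (simp add: pp_def)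
  next
    case True
    have "\<And>b. (Suc b = v) = (b = v - 1)" using assms(4) by auto
    then show ?thesis using True by (auto simp: pp_def)
  qed
  finally show ?thesis .
qed

fun remOt :: "nat \<Rightarrow> nat list list \<Rightarrow> nat list list" where
  "remOt v [] = []"
| "remOt v (s # Q) = (if s = [v] then Q else removeAll v s # remOt v Q)"

fun remO :: "nat \<Rightarrow> nat list list \<Rightarrow> nat list list" where
  "remO v [] = []"
| "remO v (s # Q) = removeAll v s # remOt v Q"

fun chOt :: "nat \<Rightarrow> nat list list \<Rightarrow> nat \<times> bool" where
  "chOt v [] = (0, False)"
| "chOt v (s # Q) = (if s = [v] then (0, True) else if v \<in> set s then (1, False)
      else (case chOt v Q of (i, b) \<Rightarrow> (Suc i, b)))"

fun chO :: "nat \<Rightarrow> nat list list \<Rightarrow> nat \<times> bool" where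
  "chO v [] = (0, False)"
| "chO v (s # Q) = (if v \<in> set s then (0, False) else chOt v Q)"

lemma remOt_id: "v \<notin> set (concat Q) \<Longrightarrow> remOt v Q = Q"
  by (induction Q) auto

lemma remOt_insO: "tailok Q \<Longrightarrow> v \<notin> set (concat Q) \<Longrightarrow> i < length Q \<Longrightarrow>
   remOt v (insO v Q (i, b)) = Q \<and> chOt v (insO v Q (i, b)) = (Suc i, b)"
proof (induction Q arbitrary: i)
  case Nil then show ?case by simp
next
  case (Cons s Q)
  have s: "s \<noteq> []" and q: "tailok Q" using Cons.prems by (auto simp: tailok_def)
  show ?case
  proof (cases i)
    case 0 then show ?thesis using s Cons.prems by (cases b) (auto simp: remOt_id)
  next
    case (Suc j) then show ?thesis using Cons.IH[OF q, of j] Cons.prems s by auto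
  qed
qed

lemma remO_insO: assumes a: "tailok (tl Q)" "v \<notin> set (concat Q)" "i < length Q" shows
   "remO v (insO v Q (i, b)) = Q \<and> chO v (insO v Q (i, b)) = (i, b)"
proof (cases Q)
  case Nil then show ?thesis using a by simp
next
  case (Cons s Q')
  show ?thesis
  proof (cases i)
    case 0 then show ?thesis using a Cons by (cases b) (auto simp: remOt_id)
  next
    case (Suc j) then show ?thesis using a Cons remOt_insO[of Q' v j b] by auto
  qed
qed

lemma removeAll_last: "distinct s \<Longrightarrow> s \<noteq> [] \<Longrightarrow> last s = v \<Longrightarrow> removeAll v s = butlast s"
proof -
  assume a: "distinct s" "s \<noteq> []" "last s = v"
  then have e: "s = butlast s @ [v]" by (metis append_butlast_last_id)
  then have "v \<notin> set (butlast s)" using a(1) by (metis distinct_append not_distinct_conv_prefix)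
  then show ?thesis by (subst e) simp
qed

lemma insO_remOt: "v \<in> set (concat Q) \<Longrightarrow> distinct (concat Q) \<Longrightarrow> (\<forall>s\<in>set Q. v \<in> set s \<longrightarrow> last s = v) \<Longrightarrow>
   insO v (p # remOt v Q) (chOt v Q) = p # Q \<and> fst (chOt v Q) \<le> length (remOt v Q)"
proof (induction Q arbitrary: p)
  case Nil then show ?case by simp
next
  case (Cons s Q)
  show ?case
  proof (cases "s = [v]")
    case True then show ?thesis by simp
  next
    case False
    show ?thesis
    proof (cases "v \<in> set s")
      case True
      then have "v \<notin> set (concat Q)" "distinct s" using Cons.prems(2) by auto
      moreover have "last s = v" "s \<noteq> []" using True Cons.prems(3) by auto
      ultimately show ?thesis using False True removeAll_last[of s v]
        by (simp add: remOt_id) (metis append_butlast_last_id)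
    next
      case False
      then have "v \<in> set (concat Q)" "distinct (concat Q)" using Cons.prems by auto
      note ih = Cons.IH[OF this, of s]
      obtain i b where c: "chOt v Q = (i, b)" by (cases "chOt v Q")
      show ?thesis using ih c False \<open>s \<noteq> [v]\<close> Cons.prems(3) by auto
    qed
  qed
qed

lemma insO_remO: assumes a: "v \<in> set (concat T)" "distinct (concat T)" "\<forall>s\<in>set T. v \<in> set s \<longrightarrow> last s = v"
  shows "insO v (remO v T) (chO v T) = T \<and> fst (chO v T) < length (remO v T)"
proof (cases T)
  case Nil then show ?thesis using a by simp
next
  case (Cons s Q)
  show ?thesis
  proof (cases "v \<in> set s")
    case True
    then have "v \<notin> set (concat Q)" "distinct s" using a(2) Cons by auto
    moreover have "last s = v" "s \<noteq> []" using True a(3) Cons by auto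
    ultimately show ?thesis using True removeAll_last[of s v] Cons
      by (simp add: remOt_id) (metis append_butlast_last_id)
  next
    case False
    then have "v \<in> set (concat Q)" "distinct (concat Q)" "\<forall>s\<in>set Q. v \<in> set s \<longrightarrow> last s = v" using a Cons by auto
    from insO_remOt[OF this, of s] show ?thesis using False Cons by auto
  qed
qed

lemma last_odd_max: "good s \<Longrightarrow> distinct s \<Longrightarrow> v \<in> set s \<Longrightarrow> \<forall>x\<in>set s. x \<le> v \<Longrightarrow> odd v \<Longrightarrow> last s = v"
proof (induction s rule: induct_list012)
  case 1 then show ?case by simp
next
  case (2 x) then show ?case by simp
next
  case (3 x y zs)
  show ?case
  proof (cases "x = v")
    case True
    then have "y < v" using 3 by (metis distinct_length_2_or_more le_neq_implies_less list.set_intros(1,2))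
    then show ?thesis using 3 True by auto
  next
    case False then show ?thesis using 3 by auto
  qed
qed

lemma good_butlast: "good s \<Longrightarrow> good (butlast s)"
  by (metis append_butlast_last_id butlast.simps(1) good_append)

lemma hd_butlast': "butlast s \<noteq> [] \<Longrightarrow> hd (butlast s) = hd s"
  by (metis append_butlast_last_id butlast.simps(1) hd_append2)

lemma set_remOt: "set (remOt v Q) \<subseteq> removeAll v ` set Q \<union> set Q"
  by (induction Q) auto

lemma set_remO: "set (remO v T) \<subseteq> removeAll v ` set T \<union> set T"
  by (cases T) (use set_remOt in auto)

lemma tailok_remOt: "tailok Q \<Longrightarrow> (\<forall>s\<in>set Q. v \<in> set s \<longrightarrow> last s = v \<and> distinct s) \<Longrightarrow> tailok (remOt v Q)"
proof (induction Q)
  case Nil then show ?case by simp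
next
  case (Cons s Q)
  have q: "tailok Q" and s: "s \<noteq> []" "odd (hd s)" using Cons.prems by (auto simp: tailok_def)
  have ih: "tailok (remOt v Q)" using Cons.IH[OF q] Cons.prems by auto
  show ?case
  proof (cases "s = [v]")
    case True then show ?thesis using q by simp
  next
    case False
    show ?thesis
    proof (cases "v \<in> set s")
      case True
      then have "last s = v" "distinct s" using Cons.prems by auto
      then have r: "removeAll v s = butlast s" using removeAll_last[of s v] s by auto
      have "butlast s \<noteq> []" using False s \<open>last s = v\<close> by (metis append_butlast_last_id append_self_conv2)
      then show ?thesis using False ih s r hd_butlast'[of s] by (auto simp: tailok_def)
    next
      case False
      then show ?thesis using ih s \<open>s \<noteq> [v]\<close> by (auto simp: tailok_def)
    qed
  qed
qed

lemma all_lt_valid: "valid m Q \<Longrightarrow> \<forall>x\<in>set (concat Q). x < Suc m"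
  unfolding valid_def by auto

lemma valid_insO: assumes "valid m Q" "i < length Q" "odd (Suc m)"
  shows "valid (Suc m) (insO (Suc m) Q (i, b))"
proof -
  obtain xs ys where sp: "concat Q = xs @ ys" "concat (insO (Suc m) Q (i, b)) = xs @ Suc m # ys"
    using insO_split[OF assms(2)] by blast
  have lt: "\<forall>x\<in>set (concat Q). x < Suc m" using all_lt_valid[OF assms(1)] .
  have "Suc m \<notin> set xs" "Suc m \<notin> set ys" using lt sp(1) by auto
  then show ?thesis using assms sp lt insO_Nil_iff[OF assms(2)] good_insO[OF _ lt] tailok_tl_insO[of Q "Suc m" i b]
    unfolding valid_def by (auto simp: atLeastAtMostSuc_conv)
qed

lemma distinct_concat_mem: "distinct (concat T) \<Longrightarrow> s \<in> set T \<Longrightarrow> distinct s"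
  by (induction T) auto

lemma valid_remO: assumes "valid (Suc m) T" "odd (Suc m)"
  shows "valid m (remO (Suc m) T) \<and> chO (Suc m) T \<in> CO (remO (Suc m) T)
     \<and> insO (Suc m) (remO (Suc m) T) (chO (Suc m) T) = T"
proof -
  let ?v = "Suc m"
  have v: "?v \<in> set (concat T)" "distinct (concat T)" "T \<noteq> []" using assms(1) unfolding valid_def by auto
  have ls: "\<forall>s\<in>set T. ?v \<in> set s \<longrightarrow> last s = ?v \<and> distinct s"
  proof (intro ballI impI)
    fix s assume s: "s \<in> set T" "?v \<in> set s"
    then have "distinct s" using v(2) distinct_concat_mem by blast
    moreover have "good s" using s assms(1) unfolding valid_def by auto
    moreover have "set s \<subseteq> set (concat T)" using s(1) by auto
    then have "\<forall>x\<in>set s. x \<le> ?v" using assms(1) unfolding valid_def by auto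
    ultimately show "last s = ?v \<and> distinct s" using last_odd_max[of s ?v] s assms(2) by auto
  qed
  have ir: "insO ?v (remO ?v T) (chO ?v T) = T \<and> fst (chO ?v T) < length (remO ?v T)"
    using insO_remO[OF v(1,2)] ls by auto
  obtain i b where c: "chO ?v T = (i, b)" by (cases "chO ?v T")
  obtain xs ys where sp: "concat (remO ?v T) = xs @ ys" "concat T = xs @ ?v # ys"
    using insO_split[of i "remO ?v T" ?v b] ir c by auto
  have g: "\<forall>s\<in>set (remO ?v T). good s"
  proof
    fix s' assume "s' \<in> set (remO ?v T)"
    then consider "s' \<in> set T" | s where "s \<in> set T" "s' = removeAll ?v s" using set_remO by blast
    then show "good s'"
    proof cases
      case 1 then show ?thesis using assms(1) unfolding valid_def by auto
    next
      case 2
    note s = 2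
    have gs: "good s" using s assms(1) unfolding valid_def by auto
    show "good s'"
    proof (cases "?v \<in> set s")
      case True
      then have "s \<noteq> []" by auto
      then have "s' = butlast s" using removeAll_last[of s ?v] ls s True by auto
      then show ?thesis using gs good_butlast by simp
    next
      case False then show ?thesis using s gs by simp
    qed
    qed
  qed
  have t: "tailok (tl (remO ?v T))"
  proof (cases T)
    case (Cons s Q)
    then show ?thesis using tailok_remOt[of Q ?v] assms(1) ls unfolding valid_def by auto
  qed (use v in simp)
  have "remO ?v T \<noteq> []" using v(3) by (cases T) auto
  moreover have "distinct (concat (remO ?v T))" using sp v(2) by auto
  moreover have "set (concat (remO ?v T)) = {1..m}"
  proof -
    have "set (concat T) = {1..Suc m}" using assms(1) unfolding valid_def by auto
    moreover have "?v \<notin> set xs \<and> ?v \<notin> set ys" using v(2) sp(2) by auto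
    ultimately have "insert ?v (set xs \<union> set ys) = insert ?v {1..m}"
      using sp by (simp add: atLeastAtMostSuc_conv)
    moreover have "?v \<notin> {1..m}" by simp
    ultimately have "set xs \<union> set ys = {1..m}" using insert_ident \<open>?v \<notin> set xs \<and> ?v \<notin> set ys\<close>
      by (metis Un_iff)
    then show ?thesis using sp by simp
  qed
  ultimately have "valid m (remO ?v T)" using g t unfolding valid_def by auto
  then show ?thesis using ir c unfolding CO_def by auto
qed

lemma bij_stepO: assumes "odd (Suc m)"
  shows "bij_betw (\<lambda>(Q, c). insO (Suc m) Q c) (SIGMA Q:LL m. CO Q) (LL (Suc m))"
proof (rule bij_betw_byWitness[where f' = "\<lambda>T. (remO (Suc m) T, chO (Suc m) T)"])
  show "\<forall>a\<in>SIGMA Q:LL m. CO Q. (remO (Suc m) (case a of (Q, c) \<Rightarrow> insO (Suc m) Q c), chO (Suc m) (case a of (Q, c) \<Rightarrow> insO (Suc m) Q c)) = a"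
  proof safe
    fix Q i b assume "Q \<in> LL m" "(i, b) \<in> CO Q"
    then have "valid m Q" "i < length Q" by (auto simp: LL_def CO_def)
    moreover have "Suc m \<notin> set (concat Q)" using all_lt_valid[OF \<open>valid m Q\<close>] by auto
    ultimately show "remO (Suc m) (insO (Suc m) Q (i, b)) = Q" "chO (Suc m) (insO (Suc m) Q (i, b)) = (i, b)"
      using remO_insO[of Q "Suc m" i b] unfolding valid_def by auto
  qed
  show "\<forall>a'\<in>LL (Suc m). (case (remO (Suc m) a', chO (Suc m) a') of (Q, c) \<Rightarrow> insO (Suc m) Q c) = a'"
    using valid_remO[OF _ assms] by (auto simp: LL_def)
  show "(\<lambda>(Q, c). insO (Suc m) Q c) ` (SIGMA Q:LL m. CO Q) \<subseteq> LL (Suc m)"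
    using valid_insO[OF _ _ assms] by (auto simp: LL_def CO_def)
  show "(\<lambda>T. (remO (Suc m) T, chO (Suc m) T)) ` LL (Suc m) \<subseteq> (SIGMA Q:LL m. CO Q)"
    using valid_remO[OF _ assms] by (auto simp: LL_def)
qed

fun remE :: "nat \<Rightarrow> nat list list \<Rightarrow> nat list list" where
  "remE v [] = []"
| "remE v (s # Q) = (if v \<in> set s then
      (if last s = v then butlast s # Q else takeWhile (\<lambda>x. x \<noteq> v) s # tl (dropWhile (\<lambda>x. x \<noteq> v) s) # Q)
    else s # remE v Q)"

fun chE :: "nat \<Rightarrow> nat list list \<Rightarrow> nat \<times> bool" where
  "chE v [] = (0, False)"
| "chE v (s # Q) = (if v \<in> set s then (0, last s \<noteq> v) else (case chE v Q of (i, c) \<Rightarrow> (Suc i, c)))"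

lemma remE_id: "v \<notin> set (concat Q) \<Longrightarrow> remE v Q = Q"
  by (induction Q) auto

lemma remE_split: "v \<notin> set a \<Longrightarrow> v \<notin> set t \<Longrightarrow>
   remE v ((a @ v # t) # Q) = (if t = [] then a # Q else a # t # Q) \<and> chE v ((a @ v # t) # Q) = (0, t \<noteq> [])"
proof -
  assume a: "v \<notin> set a" "v \<notin> set t"
  have tw: "takeWhile (\<lambda>x. x \<noteq> v) (a @ v # t) = a" using a(1) by (induction a) auto
  have dw: "dropWhile (\<lambda>x. x \<noteq> v) (a @ v # t) = v # t" using a(1) by (induction a) auto
  have "t \<noteq> [] \<Longrightarrow> last t \<noteq> v" using a(2) last_in_set by blast
  then show ?thesis using tw dw by auto
qed

lemma remE_insE: "v \<notin> set (concat Q) \<Longrightarrow> tailok (tl Q) \<Longrightarrow> (if c then Suc i < length Q else i < length Q) \<Longrightarrow>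
   remE v (insE v Q (i, c)) = Q \<and> chE v (insE v Q (i, c)) = (i, c)"
proof (induction Q arbitrary: i)
  case Nil then show ?case by (simp split: if_splits)
next
  case (Cons s Q)
  have tq: "tailok (tl Q)" using Cons.prems(2) by (cases Q) (auto simp: tailok_def)
  show ?case
  proof (cases i)
    case 0
    show ?thesis
    proof (cases c)
      case True
      then obtain t Q' where Q: "Q = t # Q'" using Cons.prems 0 by (cases Q) auto
      then have "t \<noteq> []" using Cons.prems(2) by (auto simp: tailok_def)
      then show ?thesis using remE_split[of v s t Q'] Cons.prems Q 0 True by (auto simp: remE_id)
    next
      case False
      then show ?thesis using remE_split[of v s "[]" Q] Cons.prems 0 by (auto simp: remE_id)
    qed
  next
    case (Suc j)
    then have j: "if c then Suc j < length Q else j < length Q" using Cons.prems by (simp split: if_splits)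
    show ?thesis using Suc Cons.IH[OF _ tq j] Cons.prems by auto
  qed
qed

lemma insE_remE: "v \<in> set (concat T) \<Longrightarrow> distinct (concat T) \<Longrightarrow>
   insE v (remE v T) (chE v T) = T \<and> (if snd (chE v T) then Suc (fst (chE v T)) < length (remE v T) else fst (chE v T) < length (remE v T))"
proof (induction T)
  case Nil then show ?case by simp
next
  case (Cons s Q)
  show ?case
  proof (cases "v \<in> set s")
    case True
    then obtain a t where s: "s = a @ v # t" "v \<notin> set a" by (meson split_list_first)
    moreover have "v \<notin> set t" "distinct s" using Cons.prems(2) s by auto
    ultimately show ?thesis using remE_split[of v a t Q] by (cases t) auto
  next
    case False
    then have "v \<in> set (concat Q)" "distinct (concat Q)" using Cons.prems by auto
    note ih = Cons.IH[OF this]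
    obtain i c where c: "chE v Q = (i, c)" by (cases "chE v Q")
    show ?thesis using ih c False by (auto split: if_splits)
  qed
qed

lemma valid_insE: assumes "valid m Q" "if c then Suc i < length Q else i < length Q" "even (Suc m)"
  shows "valid (Suc m) (insE (Suc m) Q (i, c))"
proof -
  obtain xs ys where sp: "concat Q = xs @ ys" "concat (insE (Suc m) Q (i, c)) = xs @ Suc m # ys"
    using insE_split[OF assms(2)] by blast
  have lt: "\<forall>x\<in>set (concat Q). x < Suc m" using all_lt_valid[OF assms(1)] .
  have "Suc m \<notin> set xs" "Suc m \<notin> set ys" using lt sp(1) by auto
  then show ?thesis using assms sp lt insE_Nil_iff[OF assms(2)] good_insE[OF _ lt _ assms(3)] tailok_tl_insE[of Q "Suc m" i c]
    unfolding valid_def by (auto simp: atLeastAtMostSuc_conv)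
qed


lemma good_split: "good (a @ v # t) \<Longrightarrow> good a \<and> good t \<and> good (v # t)"
  using good_append[of a "v # t"] good_append[of "[v]" t] by auto

lemma hd_odd_split: "good (a @ v # t) \<Longrightarrow> t \<noteq> [] \<Longrightarrow> hd t < v \<Longrightarrow> odd (hd t)"
  using good_split[of a v t] good_append[of "[v]" t] by auto

lemma set_remE: "distinct (concat T) \<Longrightarrow> s' \<in> set (remE v T) \<Longrightarrow>
   s' \<in> set T \<or> (\<exists>a t. (a @ v # t) \<in> set T \<and> (s' = a \<or> s' = t))"
proof (induction T)
  case Nil then show ?case by simp
next
  case (Cons s Q)
  show ?case
  proof (cases "v \<in> set s")
    case True
    then obtain a t where s: "s = a @ v # t" "v \<notin> set a" by (meson split_list_first)
    moreover have "v \<notin> set t" using Cons.prems(1) s by auto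
    ultimately have "remE v (s # Q) = (if t = [] then a # Q else a # t # Q)" using remE_split[of v a t Q] by auto
    then show ?thesis using Cons.prems(2) s by (auto split: if_splits)
  next
    case False then show ?thesis using Cons by auto
  qed
qed

lemma tailok_remE: "tailok Q \<Longrightarrow> distinct (concat Q) \<Longrightarrow> even v \<Longrightarrow> \<forall>s\<in>set Q. good s \<Longrightarrow>
   \<forall>x\<in>set (concat Q). x \<le> v \<Longrightarrow> tailok (remE v Q)"
proof (induction Q)
  case Nil then show ?case by simp
next
  case (Cons s Q)
  have q: "tailok Q" and s0: "s \<noteq> []" "odd (hd s)" using Cons.prems by (auto simp: tailok_def)
  show ?case
  proof (cases "v \<in> set s")
    case True
    then obtain a t where s: "s = a @ v # t" "v \<notin> set a" by (meson split_list_first)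
    moreover have vt: "v \<notin> set t" using Cons.prems(2) s by auto
    ultimately have r: "remE v (s # Q) = (if t = [] then a # Q else a # t # Q)" using remE_split[of v a t Q] by auto
    have "a \<noteq> []" using s s0 Cons.prems(3) by (cases a) auto
    then have ha: "hd a = hd s" using s by simp
    have "t \<noteq> [] \<Longrightarrow> odd (hd t)"
    proof -
      assume tn: "t \<noteq> []"
      have "hd t \<in> set (concat (s # Q))" using tn s by auto
      then have "hd t \<le> v" using Cons.prems(5) by blast
      moreover have "hd t \<noteq> v" using vt tn hd_in_set by metis
      ultimately show "odd (hd t)" using hd_odd_split[of a v t] Cons.prems(4) s tn by auto
    qed
    then show ?thesis using r q s0 ha \<open>a \<noteq> []\<close> by (auto simp: tailok_def)
  next
    case False
    have "tailok (remE v Q)" using Cons.IH[OF q] Cons.prems by auto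
    then show ?thesis using False s0 by (auto simp: tailok_def)
  qed
qed

lemma valid_remE: assumes "valid (Suc m) T" "even (Suc m)"
  shows "valid m (remE (Suc m) T) \<and> chE (Suc m) T \<in> CE (remE (Suc m) T)
     \<and> insE (Suc m) (remE (Suc m) T) (chE (Suc m) T) = T"
proof -
  let ?v = "Suc m"
  have v: "?v \<in> set (concat T)" "distinct (concat T)" "T \<noteq> []" using assms(1) unfolding valid_def by auto
  have le: "\<forall>x\<in>set (concat T). x \<le> ?v" using assms(1) unfolding valid_def by auto
  have ir: "insE ?v (remE ?v T) (chE ?v T) = T \<and> (if snd (chE ?v T) then Suc (fst (chE ?v T)) < length (remE ?v T) else fst (chE ?v T) < length (remE ?v T))"
    using insE_remE[OF v(1,2)] by auto
  obtain i0 c0 where cc: "chE ?v T = (i0, c0)" by (cases "chE ?v T")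
  have idx: "if c0 then Suc i0 < length (remE ?v T) else i0 < length (remE ?v T)" using conjunct2[OF ir] unfolding cc by (cases c0) auto
  have eT: "insE ?v (remE ?v T) (i0, c0) = T" using conjunct1[OF ir] unfolding cc by simp
  obtain xs ys where sp: "concat (remE ?v T) = xs @ ys" "concat T = xs @ ?v # ys"
    using insE_split[OF idx, of ?v] eT by metis
  have g: "\<forall>s\<in>set (remE ?v T). good s"
  proof
    fix s' assume "s' \<in> set (remE ?v T)"
    then have "s' \<in> set T \<or> (\<exists>a t. (a @ ?v # t) \<in> set T \<and> (s' = a \<or> s' = t))" using set_remE v(2) by blast
    then show "good s'" using assms(1) good_split unfolding valid_def by blast
  qed
  have t: "tailok (tl (remE ?v T))"
  proof (cases T)
    case (Cons s Q)
    have tq: "tailok Q" using assms(1) Cons unfolding valid_def by auto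
    show ?thesis
    proof (cases "?v \<in> set s")
      case True
      then obtain a t where s: "s = a @ ?v # t" "?v \<notin> set a" by (meson split_list_first)
      moreover have vt: "?v \<notin> set t" using v(2) s Cons by auto
      ultimately have r: "remE ?v (s # Q) = (if t = [] then a # Q else a # t # Q)" using remE_split[of ?v a t Q] by auto
      have "t \<noteq> [] \<Longrightarrow> odd (hd t)"
      proof -
        assume tn: "t \<noteq> []"
        have "hd t \<in> set (concat T)" using tn s Cons by auto
        then have "hd t \<le> ?v" using le by blast
        moreover have "hd t \<noteq> ?v" using vt tn hd_in_set by metis
        moreover have "good s" using assms(1) Cons unfolding valid_def by auto
        ultimately show "odd (hd t)" using hd_odd_split[of a ?v t] s tn by auto
      qed
      then show ?thesis using r Cons tq by (auto simp: tailok_def)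
    next
      case False
      have "tailok (remE ?v Q)"
        using tailok_remE[OF tq _ assms(2)] assms(1) Cons le unfolding valid_def by auto
      then show ?thesis using False Cons by simp
    qed
  qed (use v in simp)
  have "remE ?v T \<noteq> []" using v(3) by (cases T) auto
  moreover have "distinct (concat (remE ?v T))" using sp v(2) by auto
  moreover have "set (concat (remE ?v T)) = {1..m}"
  proof -
    have "set (concat T) = {1..Suc m}" using assms(1) unfolding valid_def by auto
    moreover have "?v \<notin> set xs \<and> ?v \<notin> set ys" using v(2) sp(2) by auto
    ultimately have "insert ?v (set xs \<union> set ys) = insert ?v {1..m}"
      using sp by (simp add: atLeastAtMostSuc_conv)
    moreover have "?v \<notin> {1..m}" by simp
    ultimately have "set xs \<union> set ys = {1..m}" using insert_ident \<open>?v \<notin> set xs \<and> ?v \<notin> set ys\<close>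
      by (metis Un_iff)
    then show ?thesis using sp by simp
  qed
  ultimately have "valid m (remE ?v T)" using g t unfolding valid_def by auto
  then show ?thesis using idx eT cc unfolding CE_def by auto
qed

lemma bij_stepE: assumes "even (Suc m)"
  shows "bij_betw (\<lambda>(Q, c). insE (Suc m) Q c) (SIGMA Q:LL m. CE Q) (LL (Suc m))"
proof (rule bij_betw_byWitness[where f' = "\<lambda>T. (remE (Suc m) T, chE (Suc m) T)"])
  show "\<forall>a\<in>SIGMA Q:LL m. CE Q. (remE (Suc m) (case a of (Q, c) \<Rightarrow> insE (Suc m) Q c), chE (Suc m) (case a of (Q, c) \<Rightarrow> insE (Suc m) Q c)) = a"
  proof safe
    fix Q i c assume "Q \<in> LL m" "(i, c) \<in> CE Q"
    then have "valid m Q" "if c then Suc i < length Q else i < length Q" by (auto simp: LL_def CE_def)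
    moreover have "Suc m \<notin> set (concat Q)" using all_lt_valid[OF \<open>valid m Q\<close>] by auto
    ultimately show "remE (Suc m) (insE (Suc m) Q (i, c)) = Q" "chE (Suc m) (insE (Suc m) Q (i, c)) = (i, c)"
      using remE_insE[of "Suc m" Q c i] unfolding valid_def by auto
  qed
  show "\<forall>a'\<in>LL (Suc m). (case (remE (Suc m) a', chE (Suc m) a') of (Q, c) \<Rightarrow> insE (Suc m) Q c) = a'"
    using valid_remE[OF _ assms] by (auto simp: LL_def)
  show "(\<lambda>(Q, c). insE (Suc m) Q c) ` (SIGMA Q:LL m. CE Q) \<subseteq> LL (Suc m)"
    using valid_insE[OF _ _ assms] by (auto simp: LL_def CE_def)
  show "(\<lambda>T. (remE (Suc m) T, chE (Suc m) T)) ` LL (Suc m) \<subseteq> (SIGMA Q:LL m. CE Q)"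
    using valid_remE[OF _ assms] by (auto simp: LL_def)
qed

fun pc :: "nat \<Rightarrow> nat \<Rightarrow> nat \<Rightarrow> nat" where
  "pc 0 h d = (if h = 0 \<and> d = 0 then 1 else 0)"
| "pc (Suc k) h d = (h + 1)^2 * pc k h d + h * (h + 1) * pc k (h - 1) d
     + (h + 1) * (h + 2) * (if d = 0 then 0 else pc k (h + 1) (d - 1))"

lemma pc_supp: "pc k h d \<noteq> 0 \<Longrightarrow> h + 2 * d \<le> k"
proof (induction k arbitrary: h d)
  case 0 then show ?case by (simp split: if_splits)
next
  case (Suc k)
  consider "pc k h d \<noteq> 0" | "h \<noteq> 0" "pc k (h - 1) d \<noteq> 0" | "d \<noteq> 0" "pc k (h + 1) (d - 1) \<noteq> 0"
    using Suc.prems by (auto split: if_splits)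
  then show ?case
  proof cases
    case 1 then show ?thesis using Suc.IH by fastforce
  next
    case 2 then show ?thesis using Suc.IH[of "h - 1" d] by simp
  next
    case 3 then show ?thesis using Suc.IH[of "h + 1" "d - 1"] by simp
  qed
qed

lemma pc_zero: "k < h + 2 * d \<Longrightarrow> pc k h d = 0"
  using pc_supp by fastforce

lemma monom_Suc1: "monom (1::int) (Suc i) = monom 1 1 * monom 1 i"
  by (simp add: mult_monom)

definition gp :: "nat \<Rightarrow> nat \<Rightarrow> int poly" where
  "gp k h = (\<Sum>d\<le>k. of_nat (pc k h d) * monom 1 d)"

definition ap :: "nat \<Rightarrow> nat \<Rightarrow> int poly" where
  "ap k h = (\<Sum>d\<le>k. of_nat (pc k h d) * monom 1 d * [:1, 1:] ^ (k - h - 2 * d))"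

lemma gp_zero: "k < h \<Longrightarrow> gp k h = 0"
  unfolding gp_def using pc_zero by (intro sum.neutral) auto
lemma ap_zero: "k < h \<Longrightarrow> ap k h = 0"
  unfolding ap_def using pc_zero by (intro sum.neutral) auto

lemma gp_rec: "gp (Suc k) h = of_nat ((h + 1)^2) * gp k h + of_nat (h * (h + 1)) * gp k (h - 1)
     + of_nat ((h + 1) * (h + 2)) * monom 1 1 * gp k (h + 1)"
proof -
  have e1: "(\<Sum>d\<le>Suc k. of_nat (pc k h d) * monom 1 d) = (gp k h :: int poly)"
    unfolding gp_def using pc_zero[of k h "Suc k"] by simp
  have e2: "(\<Sum>d\<le>Suc k. of_nat (pc k (h - 1) d) * monom 1 d) = (gp k (h - 1) :: int poly)"
    unfolding gp_def using pc_zero[of k "h - 1" "Suc k"] by simp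
  have e3: "(\<Sum>d\<le>Suc k. of_nat (if d = 0 then 0 else pc k (h + 1) (d - 1)) * monom 1 d)
      = monom 1 1 * (gp k (h + 1) :: int poly)"
  proof -
    have "(\<Sum>d\<le>Suc k. of_nat (if d = 0 then 0 else pc k (h + 1) (d - 1)) * monom 1 d)
       = (\<Sum>i\<le>k. of_nat (pc k (h + 1) i) * (monom 1 (Suc i) :: int poly))"
      by (simp only: sum.atMost_Suc_shift) simp
    also have "\<dots> = (\<Sum>i\<le>k. monom 1 1 * (of_nat (pc k (h + 1) i) * monom 1 i))"
      by (rule sum.cong[OF refl]) (simp only: monom_Suc1 mult.left_commute)
    finally show ?thesis by (simp add: gp_def sum_distrib_left)
  qed
  have "gp (Suc k) h = (\<Sum>d\<le>Suc k. of_nat ((h + 1)^2) * (of_nat (pc k h d) * monom 1 d)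
      + of_nat (h * (h + 1)) * (of_nat (pc k (h - 1) d) * monom 1 d)
      + of_nat ((h + 1) * (h + 2)) * (of_nat (if d = 0 then 0 else pc k (h + 1) (d - 1)) * monom 1 d))"
    unfolding gp_def by (rule sum.cong[OF refl]) (subst pc.simps, simp only: of_nat_mult of_nat_add distrib_right mult.assoc)
  also have "\<dots> = of_nat ((h + 1)^2) * gp k h + of_nat (h * (h + 1)) * gp k (h - 1)
     + of_nat ((h + 1) * (h + 2)) * (monom 1 1 * gp k (h + 1))"
    unfolding sum.distrib sum_distrib_left[symmetric] e1 e2 e3 by simp
  finally show ?thesis by (simp add: mult.assoc)
qed

lemma ap_rec: "ap (Suc k) h = of_nat ((h + 1)^2) * [:1, 1:] * ap k h + of_nat (h * (h + 1)) * ap k (h - 1)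
     + of_nat ((h + 1) * (h + 2)) * monom 1 1 * ap k (h + 1)"
proof -
  let ?X = "[:1, 1:] :: int poly"
  have e1: "(\<Sum>d\<le>Suc k. of_nat (pc k h d) * monom 1 d * ?X ^ (Suc k - h - 2 * d)) = ?X * ap k h"
  proof -
    have "(\<Sum>d\<le>Suc k. of_nat (pc k h d) * monom 1 d * ?X ^ (Suc k - h - 2 * d))
        = (\<Sum>d\<le>k. of_nat (pc k h d) * monom 1 d * ?X ^ (Suc k - h - 2 * d))"
      using pc_zero[of k h "Suc k"] by simp
    also have "\<dots> = (\<Sum>d\<le>k. ?X * (of_nat (pc k h d) * monom 1 d * ?X ^ (k - h - 2 * d)))"
    proof (rule sum.cong[OF refl])
      fix d assume "d \<in> {..k}"
      show "of_nat (pc k h d) * monom 1 d * ?X ^ (Suc k - h - 2 * d) = ?X * (of_nat (pc k h d) * monom 1 d * ?X ^ (k - h - 2 * d))"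
      proof (cases "pc k h d = 0")
        case False
        then have "h + 2 * d \<le> k" using pc_supp by blast
        then have "Suc k - h - 2 * d = Suc (k - h - 2 * d)" by simp
        then show ?thesis by (simp add: algebra_simps)
      qed simp
    qed
    finally show ?thesis unfolding ap_def sum_distrib_left .
  qed
  have e2: "of_nat (h * (h + 1)) * (\<Sum>d\<le>Suc k. (of_nat (pc k (h - 1) d) * monom 1 d * ?X ^ (Suc k - h - 2 * d)))
       = of_nat (h * (h + 1)) * ap k (h - 1)"
  proof (cases h)
    case 0 then show ?thesis by simp
  next
    case (Suc h')
    note hs = this
    have "(\<Sum>d\<le>Suc k. of_nat (pc k h' d) * monom 1 d * ?X ^ (Suc k - Suc h' - 2 * d)) = ap k h'"
      unfolding ap_def using pc_zero[of k h' "Suc k"] by simp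
    then show ?thesis unfolding hs by simp
  qed
  have e3: "(\<Sum>d\<le>Suc k. of_nat (if d = 0 then 0 else pc k (h + 1) (d - 1)) * monom 1 d * ?X ^ (Suc k - h - 2 * d))
      = monom 1 1 * ap k (h + 1)"
  proof -
    have "(\<Sum>d\<le>Suc k. of_nat (if d = 0 then 0 else pc k (h + 1) (d - 1)) * monom 1 d * ?X ^ (Suc k - h - 2 * d))
       = (\<Sum>i\<le>k. of_nat (pc k (h + 1) i) * monom 1 (Suc i) * ?X ^ (Suc k - h - 2 * Suc i))"
      by (simp only: sum.atMost_Suc_shift) simp
    also have "\<dots> = (\<Sum>i\<le>k. monom 1 1 * (of_nat (pc k (h + 1) i) * monom 1 i * ?X ^ (k - (h + 1) - 2 * i)))"
    proof (rule sum.cong[OF refl])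
      fix i
      have "Suc k - h - 2 * Suc i = k - (h + 1) - 2 * i" by simp
      then show "of_nat (pc k (h + 1) i) * monom 1 (Suc i) * ?X ^ (Suc k - h - 2 * Suc i) = monom 1 1 * (of_nat (pc k (h + 1) i) * monom 1 i * ?X ^ (k - (h + 1) - 2 * i))"
        by (simp only: monom_Suc1 mult.left_commute mult.assoc)
    qed
    finally show ?thesis by (simp add: ap_def sum_distrib_left)
  qed
  have "ap (Suc k) h = (\<Sum>d\<le>Suc k. of_nat ((h + 1)^2) * (of_nat (pc k h d) * monom 1 d * ?X ^ (Suc k - h - 2 * d))
      + of_nat (h * (h + 1)) * (of_nat (pc k (h - 1) d) * monom 1 d * ?X ^ (Suc k - h - 2 * d))
      + of_nat ((h + 1) * (h + 2)) * (of_nat (if d = 0 then 0 else pc k (h + 1) (d - 1)) * monom 1 d * ?X ^ (Suc k - h - 2 * d)))"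
    unfolding ap_def by (rule sum.cong[OF refl]) (subst pc.simps, simp only: of_nat_mult of_nat_add distrib_right mult.assoc)
  also have "\<dots> = of_nat ((h + 1)^2) * (?X * ap k h) + of_nat (h * (h + 1)) * ap k (h - 1)
     + of_nat ((h + 1) * (h + 2)) * (monom 1 1 * ap k (h + 1))"
    unfolding sum.distrib sum_distrib_left[symmetric] e1 e2 e3 by simp
  finally show ?thesis by (simp only: mult.assoc)
qed


lemma shift_sum:
  fixes A :: "nat \<Rightarrow> 'a::comm_ring_1"
  assumes z: "\<forall>h>k. A h = 0" and b0: "\<beta> 0 = 0"
  shows "(\<Sum>h\<le>k. A h * (\<alpha> h * \<phi> h + \<beta> h * \<phi> (h - 1) + \<gamma> h * \<phi> (Suc h))) =
         (\<Sum>h\<le>Suc k. (\<alpha> h * A h + \<beta> (Suc h) * A (Suc h) + (if h = 0 then 0 else \<gamma> (h - 1) * A (h - 1))) * \<phi> h)"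
proof -
  have S1: "(\<Sum>h\<le>Suc k. \<alpha> h * A h * \<phi> h) = (\<Sum>h\<le>k. A h * (\<alpha> h * \<phi> h))"
    using z by (simp add: mult_ac)
  have S2: "(\<Sum>h\<le>Suc k. \<beta> (Suc h) * A (Suc h) * \<phi> h) = (\<Sum>h\<le>k. A h * (\<beta> h * \<phi> (h - 1)))"
  proof -
    have "(\<Sum>h\<le>k. A h * (\<beta> h * \<phi> (h - 1))) = (\<Sum>h\<le>Suc k. A h * (\<beta> h * \<phi> (h - 1)))"
      using z by simp
    also have "\<dots> = (\<Sum>h\<le>k. A (Suc h) * (\<beta> (Suc h) * \<phi> h))"
      by (simp only: sum.atMost_Suc_shift) (simp add: b0)
    also have "\<dots> = (\<Sum>h\<le>Suc k. \<beta> (Suc h) * A (Suc h) * \<phi> h)"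
      using z by (simp add: mult_ac)
    finally show ?thesis by simp
  qed
  have S3: "(\<Sum>h\<le>Suc k. (if h = 0 then 0 else \<gamma> (h - 1) * A (h - 1)) * \<phi> h) = (\<Sum>h\<le>k. A h * (\<gamma> h * \<phi> (Suc h)))"
    by (simp only: sum.atMost_Suc_shift) (simp add: mult_ac)
  have "(\<Sum>h\<le>Suc k. (\<alpha> h * A h + \<beta> (Suc h) * A (Suc h) + (if h = 0 then 0 else \<gamma> (h - 1) * A (h - 1))) * \<phi> h)
     = (\<Sum>h\<le>Suc k. \<alpha> h * A h * \<phi> h) + (\<Sum>h\<le>Suc k. \<beta> (Suc h) * A (Suc h) * \<phi> h)
       + (\<Sum>h\<le>Suc k. (if h = 0 then 0 else \<gamma> (h - 1) * A (h - 1)) * \<phi> h)"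
    by (simp only: distrib_right sum.distrib)
  also have "\<dots> = (\<Sum>h\<le>k. A h * (\<alpha> h * \<phi> h + \<beta> h * \<phi> (h - 1) + \<gamma> h * \<phi> (Suc h)))"
    unfolding S1 S2 S3 by (simp only: distrib_left sum.distrib)
  finally show ?thesis by simp
qed

lemma LL0: "LL 0 \<subseteq> {[[]]}"
proof
  fix Q assume "Q \<in> LL 0"
  then have v: "valid 0 Q" by (simp add: LL_def)
  then have e: "\<forall>s\<in>set Q. s = []" unfolding valid_def by auto
  have "tl Q = []"
  proof (rule ccontr)
    assume "tl Q \<noteq> []"
    then obtain s where "s \<in> set (tl Q)" by (cases "tl Q") auto
    then show False using v e unfolding valid_def tailok_def by (cases Q) auto
  qed
  moreover have "Q \<noteq> []" using v unfolding valid_def by auto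
  ultimately show "Q \<in> {[[]]}" using e by (cases Q) auto
qed

lemma finite_CO: "finite (CO Q)"
  by (rule finite_subset[of _ "{..<length Q} \<times> UNIV"]) (auto simp: CO_def)
lemma finite_CE: "finite (CE Q)"
  by (rule finite_subset[of _ "{..<length Q} \<times> UNIV"]) (auto simp: CE_def split: if_splits)

lemma finite_LL: "finite (LL m)"
proof (induction m)
  case 0 then show ?case using LL0 finite_subset by blast
next
  case (Suc m)
  show ?case
  proof (cases "odd (Suc m)")
    case True
    have "finite (SIGMA Q:LL m. CO Q)" using Suc finite_CO by (intro finite_SigmaI) auto
    then show ?thesis using bij_betw_finite[OF bij_stepO[OF True]] by simp
  next
    case False
    have "finite (SIGMA Q:LL m. CE Q)" using Suc finite_CE by (intro finite_SigmaI) auto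
    then show ?thesis using bij_betw_finite[OF bij_stepE] False by simp
  qed
qed

lemma sum_stepO: "odd (Suc m) \<Longrightarrow> (\<Sum>T\<in>LL (Suc m). F T) = (\<Sum>Q\<in>LL m. \<Sum>c\<in>CO Q. F (insO (Suc m) Q c))"
  by (subst sum.reindex_bij_betw[OF bij_stepO, symmetric]) (auto simp: sum.Sigma finite_LL finite_CO case_prod_unfold)

lemma sum_stepE: "even (Suc m) \<Longrightarrow> (\<Sum>T\<in>LL (Suc m). F T) = (\<Sum>Q\<in>LL m. \<Sum>c\<in>CE Q. F (insE (Suc m) Q c))"
  by (subst sum.reindex_bij_betw[OF bij_stepE, symmetric]) (auto simp: sum.Sigma finite_LL finite_CE case_prod_unfold)

lemma sum_CO: "(\<Sum>p\<in>CO R. f (snd p)) = of_nat (length R) * (f False + f True)"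
proof -
  have e: "CO R = (\<lambda>i. (i, False)) ` {..<length R} \<union> (\<lambda>i. (i, True)) ` {..<length R}"
  proof (rule set_eqI)
    fix p :: "nat \<times> bool"
    obtain i b where p: "p = (i, b)" by (cases p)
    show "p \<in> CO R \<longleftrightarrow> p \<in> (\<lambda>i. (i, False)) ` {..<length R} \<union> (\<lambda>i. (i, True)) ` {..<length R}"
      unfolding p CO_def by (cases b) auto
  qed
  show ?thesis unfolding e
    by (subst sum.union_disjoint) (auto simp: sum.reindex inj_on_def distrib_left)
qed

lemma sum_CE: "(\<Sum>p\<in>CE Q. f (snd p)) = of_nat (length Q) * f False + of_nat (length Q - 1) * f True"
proof -
  have e: "CE Q = (\<lambda>i. (i, False)) ` {..<length Q} \<union> (\<lambda>i. (i, True)) ` {..<length Q - 1}"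
  proof (rule set_eqI)
    fix p :: "nat \<times> bool"
    obtain i b where p: "p = (i, b)" by (cases p)
    show "p \<in> CE Q \<longleftrightarrow> p \<in> (\<lambda>i. (i, False)) ` {..<length Q} \<union> (\<lambda>i. (i, True)) ` {..<length Q - 1}"
      unfolding p CE_def by (cases b) auto
  qed
  show ?thesis unfolding e
    by (subst sum.union_disjoint) (auto simp: sum.reindex inj_on_def)
qed


definition Fw :: "bool \<Rightarrow> (nat \<Rightarrow> int poly) \<Rightarrow> nat list list \<Rightarrow> int poly" where
  "Fw w \<phi> T = (if w \<longrightarrow> pp T then \<phi> (length T - 1) * monom 1 (desQ T) else 0)"

definition Psi :: "bool \<Rightarrow> (nat \<Rightarrow> int poly) \<Rightarrow> nat \<Rightarrow> int poly" where
  "Psi w \<phi> h = of_nat ((h + 1)^2) * (if w then 1 else [:1, 1:]) * \<phi> h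
     + of_nat ((h + 1) * h) * monom 1 1 * \<phi> (h - 1) + of_nat ((h + 1) * (h + 2)) * \<phi> (Suc h)"

lemma X1: "[:1, 1:] = (1 + monom 1 1 :: int poly)"
  by (simp add: poly_eq_iff coeff_pCons split: nat.splits)

lemma monom_add1: "monom (1::int) (Suc d) = monom 1 d * monom 1 1"
  by (simp add: mult_monom)

lemma inner_sum:
  assumes R: "R \<in> LL (2 * k)"
  shows "(\<Sum>c1\<in>CO R. \<Sum>c2\<in>CE (insO (Suc (2 * k)) R c1). Fw w \<phi> (insE (Suc (Suc (2 * k))) (insO (Suc (2 * k)) R c1) c2))
     = (if w \<longrightarrow> pp R then monom 1 (desQ R) * Psi w \<phi> (length R - 1) else 0)"
proof -
  let ?o = "Suc (2 * k)" and ?e = "Suc (Suc (2 * k))"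
  have vR: "valid (2 * k) R" using R by (simp add: LL_def)
  have ltR: "\<forall>x\<in>set (concat R). x < ?o" using all_lt_valid[OF vR] by simp
  have tR: "tailok (tl R)" using vR by (simp add: valid_def)
  have nR: "length R \<noteq> 0" using vR by (simp add: valid_def)
  define G where "G b c = (if w \<longrightarrow> (pp R \<and> \<not> (c \<and> b)) then \<phi> (length R + (if b then 1 else 0) - (if c then 1 else 0) - 1) * monom 1 (desQ R + (if c then 1 else 0)) else 0)" for b c
  have step: "(\<Sum>c2\<in>CE (insO ?o R (i, b)). Fw w \<phi> (insE ?e (insO ?o R (i, b)) c2))
     = of_nat (length R + (if b then 1 else 0)) * G b False + of_nat (length R + (if b then 1 else 0) - 1) * G b True"
    if ib: "(i, b) \<in> CO R" for i b
  proof -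
    let ?Q = "insO ?o R (i, b)"
    have il: "i < length R" using ib by (simp add: CO_def)
    have vQ: "valid ?o ?Q" using valid_insO[OF vR il] by simp
    have ltQ: "\<forall>x\<in>set (concat ?Q). x < ?e" using all_lt_valid[OF vQ] .
    have tQ: "tailok (tl ?Q)" using vQ by (simp add: valid_def)
    have lQ: "length ?Q = length R + (if b then 1 else 0)" using length_insO[OF il] .
    have dQ: "desQ ?Q = desQ R" using desQ_insO ltR by blast
    have pQ: "pp ?Q = pp R" using pp_insO[OF ltR tR il] .
    have "?o \<notin> botset R" using botset_subset[OF tR] ltR by fastforce
    then have bQ: "(?o \<in> botset ?Q) = b" using botset_insO[OF ltR tR il] by auto
    have "(\<Sum>c2\<in>CE ?Q. Fw w \<phi> (insE ?e ?Q c2)) = (\<Sum>c2\<in>CE ?Q. G b (snd c2))"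
    proof (rule sum.cong[OF refl])
      fix c2 assume c2: "c2 \<in> CE ?Q"
      obtain j c where cj: "c2 = (j, c)" by (cases c2)
      have jl: "if c then Suc j < length ?Q else j < length ?Q" using c2 cj by (simp add: CE_def)
      have lT: "length (insE ?e ?Q (j, c)) = length ?Q - (if c then 1 else 0)" using length_insE[OF jl] .
      have dT: "desQ (insE ?e ?Q (j, c)) = desQ ?Q + (if c then 1 else 0)" using desQ_insE[OF ltQ tQ jl] .
      have pT: "pp (insE ?e ?Q (j, c)) = (pp ?Q \<and> \<not> (c \<and> ?o \<in> botset ?Q))" using pp_insE[OF ltQ tQ jl] by simp
      show "Fw w \<phi> (insE ?e ?Q c2) = G b (snd c2)"
        unfolding cj Fw_def G_def snd_conv lT dT pT lQ dQ pQ bQ by (cases b; cases c) simp_all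
    qed
    also have "\<dots> = of_nat (length ?Q) * G b False + of_nat (length ?Q - 1) * G b True"
      by (rule sum_CE)
    finally show ?thesis using lQ by simp
  qed
  have "(\<Sum>c1\<in>CO R. \<Sum>c2\<in>CE (insO ?o R c1). Fw w \<phi> (insE ?e (insO ?o R c1) c2))
     = (\<Sum>c1\<in>CO R. (\<lambda>b. of_nat (length R + (if b then 1 else 0)) * G b False + of_nat (length R + (if b then 1 else 0) - 1) * G b True) (snd c1))"
  proof (rule sum.cong[OF refl])
    fix c1 assume c1: "c1 \<in> CO R"
    obtain i b where ib: "c1 = (i, b)" by (cases c1)
    show "(\<Sum>c2\<in>CE (insO ?o R c1). Fw w \<phi> (insE ?e (insO ?o R c1) c2)) = (\<lambda>b. of_nat (length R + (if b then 1 else 0)) * G b False + of_nat (length R + (if b then 1 else 0) - 1) * G b True) (snd c1)"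
      using step[of i b] c1 unfolding ib by simp
  qed
  also have "\<dots> = of_nat (length R) * ((of_nat (length R + 0) * G False False + of_nat (length R + 0 - 1) * G False True)
      + (of_nat (length R + 1) * G True False + of_nat (length R + 1 - 1) * G True True))"
    by (subst sum_CO) (simp only: if_True if_False)
  also have "\<dots> = (if w \<longrightarrow> pp R then monom 1 (desQ R) * Psi w \<phi> (length R - 1) else 0)"
  proof (cases "w \<longrightarrow> pp R")
    case False then show ?thesis by (auto simp: G_def)
  next
    case True
    obtain h where h: "length R = Suc h" using nR by (cases "length R") auto
    have G1: "G False False = \<phi> h * monom 1 (desQ R)" using True h by (simp add: G_def)
    have G2: "G False True = \<phi> (h - 1) * monom 1 (Suc (desQ R))" using True h by (simp add: G_def)
    have G3: "G True False = \<phi> (Suc h) * monom 1 (desQ R)" using True h by (simp add: G_def)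
    have G4: "G True True = (if w then 0 else \<phi> h * monom 1 (Suc (desQ R)))" using True h by (simp add: G_def)
    have m1: "monom (1::int) (Suc (desQ R)) = monom 1 (desQ R) * monom 1 1" by (rule monom_add1)
    show ?thesis
      unfolding h G1 G2 G3 G4 Psi_def X1 m1 using True
      by (cases w) (simp_all add: algebra_simps power2_eq_square)
  qed
  finally show ?thesis .
qed


lemma LL0_eq: "LL 0 = {[[]]}"
  using LL0 by (auto simp: LL_def valid_def)

definition PP :: "bool \<Rightarrow> nat \<Rightarrow> nat \<Rightarrow> int poly" where
  "PP w k h = (if w then gp k h else ap k h)"

lemma PP_zero: "k < h \<Longrightarrow> PP w k h = 0"
  by (simp add: PP_def gp_zero ap_zero)

lemma PP_rec: "PP w (Suc k) h = (of_nat ((h + 1)^2) * (if w then 1 else [:1, 1:])) * PP w k h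
   + (of_nat ((Suc h + 1) * Suc h) * monom 1 1) * PP w k (Suc h)
   + (if h = 0 then 0 else of_nat ((h - 1 + 1) * (h - 1 + 2)) * PP w k (h - 1))"
proof -
  have a: "of_nat ((Suc h + 1) * Suc h) * monom 1 1 * PP w k (Suc h) = of_nat ((h + 1) * (h + 2)) * monom 1 1 * PP w k (h + 1)"
    by (simp add: algebra_simps)
  have b: "(if h = 0 then 0 else of_nat ((h - 1 + 1) * (h - 1 + 2)) * PP w k (h - 1)) = of_nat (h * (h + 1)) * PP w k (h - 1)"
    by (cases h) (simp_all add: algebra_simps)
  show ?thesis unfolding a b
    by (cases w) (simp_all add: PP_def gp_rec ap_rec mult.assoc)
qed

lemma comb_main: "(\<Sum>Q\<in>LL (2 * k). Fw w \<phi> Q) = (\<Sum>h\<le>k. PP w k h * \<phi> h)"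
proof (induction k arbitrary: \<phi>)
  case 0
  have "pp [[]]" by (simp add: pp_def)
  then show ?case using LL0_eq by (simp add: Fw_def desQ_def PP_def gp_def ap_def)
next
  case (Suc k)
  let ?o = "Suc (2 * k)" and ?e = "Suc (Suc (2 * k))"
  have "(\<Sum>Q\<in>LL (2 * Suc k). Fw w \<phi> Q) = (\<Sum>Q\<in>LL ?e. Fw w \<phi> Q)" by simp
  also have "\<dots> = (\<Sum>Q\<in>LL ?o. \<Sum>c\<in>CE Q. Fw w \<phi> (insE ?e Q c))" by (rule sum_stepE) simp
  also have "\<dots> = (\<Sum>R\<in>LL (2 * k). \<Sum>c1\<in>CO R. \<Sum>c\<in>CE (insO ?o R c1). Fw w \<phi> (insE ?e (insO ?o R c1) c))"
    by (rule sum_stepO) simp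
  also have "\<dots> = (\<Sum>R\<in>LL (2 * k). Fw w (Psi w \<phi>) R)"
  proof (rule sum.cong[OF refl])
    fix R assume R: "R \<in> LL (2 * k)"
    show "(\<Sum>c1\<in>CO R. \<Sum>c\<in>CE (insO ?o R c1). Fw w \<phi> (insE ?e (insO ?o R c1) c)) = Fw w (Psi w \<phi>) R"
      unfolding inner_sum[OF R] by (simp add: Fw_def mult.commute)
  qed
  also have "\<dots> = (\<Sum>h\<le>k. PP w k h * Psi w \<phi> h)" by (rule Suc.IH)
  also have "\<dots> = (\<Sum>h\<le>k. PP w k h * ((of_nat ((h + 1)^2) * (if w then 1 else [:1, 1:])) * \<phi> h
        + (of_nat ((h + 1) * h) * monom 1 1) * \<phi> (h - 1) + of_nat ((h + 1) * (h + 2)) * \<phi> (Suc h)))"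
    by (simp add: Psi_def mult.assoc)
  also have "\<dots> = (\<Sum>h\<le>Suc k. ((of_nat ((h + 1)^2) * (if w then 1 else [:1, 1:])) * PP w k h
        + (of_nat ((Suc h + 1) * Suc h) * monom 1 1) * PP w k (Suc h)
        + (if h = 0 then 0 else of_nat ((h - 1 + 1) * (h - 1 + 2)) * PP w k (h - 1))) * \<phi> h)"
    by (rule shift_sum[where \<alpha> = "\<lambda>h. of_nat ((h + 1)^2) * (if w then 1 else [:1, 1:])"
        and \<beta> = "\<lambda>h. of_nat ((h + 1) * h) * monom 1 1" and \<gamma> = "\<lambda>h. of_nat ((h + 1) * (h + 2))"])
      (auto simp: PP_zero)
  also have "\<dots> = (\<Sum>h\<le>Suc k. PP w (Suc k) h * \<phi> h)"
    by (simp only: PP_rec)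
  finally show ?case .
qed

lemma descents_Cons2: "descents (a # b # r) = (if b < a then {0} else {}) \<union> Suc ` descents (b # r)"
proof (rule set_eqI)
  fix i
  show "i \<in> descents (a # b # r) \<longleftrightarrow> i \<in> (if b < a then {0} else {}) \<union> Suc ` descents (b # r)"
    by (cases i) (auto simp: descents_def)
qed

lemma descents_short: "length xs < 2 \<Longrightarrow> descents xs = {}"
  unfolding descents_def by auto

lemma finite_descents: "finite (descents xs)"
  unfolding descents_def by (rule finite_subset[of _ "{..<length xs}"]) auto

lemma des_dc: "des xs = dc xs"
proof (induction xs rule: induct_list012)
  case 1 then show ?case by (simp add: des_def descents_short)
next
  case (2 x) then show ?case by (simp add: des_def descents_short)
next
  case (3 x y zs)
  have "card (descents (x # y # zs)) = (if y < x then 1 else 0) + card (descents (y # zs))"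
    unfolding descents_Cons2 using finite_descents[of "y # zs"]
    by (subst card_Un_disjoint) (auto simp: card_image)
  then show ?case using 3 by (simp add: des_def)
qed

lemma good_iff: "good xs \<longleftrightarrow> (\<forall>i\<in>descents xs. even (xs ! i) \<and> odd (xs ! Suc i))"
proof (induction xs rule: induct_list012)
  case 1 then show ?case by (simp add: descents_short)
next
  case (2 x) then show ?case by (simp add: descents_short)
next
  case (3 x y zs)
  show ?case unfolding descents_Cons2 using 3 by auto
qed

lemma adj_nth: "adj xs = {(xs ! i, xs ! Suc i) | i. Suc i < length xs}"
proof (induction xs rule: induct_list012)
  case 1 then show ?case by simp
next
  case (2 x) then show ?case by simp
next
  case (3 x y zs)
  show ?case
  proof (rule set_eqI)
    fix p
    show "p \<in> adj (x # y # zs) \<longleftrightarrow> p \<in> {((x # y # zs) ! i, (x # y # zs) ! Suc i) | i. Suc i < length (x # y # zs)}"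
    proof
      assume "p \<in> adj (x # y # zs)"
      then consider "p = (x, y)" | "p \<in> adj (y # zs)" by auto
      then show "p \<in> {((x # y # zs) ! i, (x # y # zs) ! Suc i) | i. Suc i < length (x # y # zs)}"
      proof cases
        case 1 then show ?thesis by (intro CollectI exI[of _ 0]) auto
      next
        case 2
        then obtain i where "p = ((y # zs) ! i, (y # zs) ! Suc i)" "Suc i < length (y # zs)" using 3 by auto
        then show ?thesis by (intro CollectI exI[of _ "Suc i"]) auto
      qed
    next
      assume "p \<in> {((x # y # zs) ! i, (x # y # zs) ! Suc i) | i. Suc i < length (x # y # zs)}"
      then obtain i where i: "p = ((x # y # zs) ! i, (x # y # zs) ! Suc i)" "Suc i < length (x # y # zs)" by auto
      show "p \<in> adj (x # y # zs)"
      proof (cases i)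
        case 0 then show ?thesis using i by simp
      next
        case (Suc j)
        then have "p \<in> adj (y # zs)" using i 3 by auto
        then show ?thesis by simp
      qed
    qed
  qed
qed

lemma tops_eq: "tops xs = descent_tops xs"
  unfolding tops_def descent_tops_def descents_def adj_nth by auto

lemma bots_eq: "bots xs = descent_bottoms xs"
  unfolding bots_def descent_bottoms_def descents_def adj_nth by auto

lemma single_LL: "[xs] \<in> LL m \<longleftrightarrow> xs \<in> XX m"
  unfolding LL_def valid_def XX_def perms_def good_iff by auto

lemma pp_single: "xs \<in> XX m \<Longrightarrow> pp [xs] \<longleftrightarrow> primary xs"
proof -
  assume x: "xs \<in> XX m"
  have par: "\<forall>t\<in>descent_tops xs. even t" "\<forall>b\<in>descent_bottoms xs. odd b"
    using x unfolding XX_def descent_tops_def descent_bottoms_def by auto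
  have "pp [xs] \<longleftrightarrow> (\<forall>b\<in>descent_bottoms xs. Suc b \<notin> descent_tops xs)"
    unfolding pp_def topset_def by (simp add: tops_eq bots_eq)
  also have "\<dots> \<longleftrightarrow> primary xs"
  proof
    assume a: "\<forall>b\<in>descent_bottoms xs. Suc b \<notin> descent_tops xs"
    show "primary xs" unfolding primary_def
    proof (intro ballI impI)
      fix t b assume tb: "t \<in> descent_tops xs" "b \<in> descent_bottoms xs" "b < t"
      have "t \<noteq> Suc b" using a tb by auto
      moreover have "t \<noteq> Suc (Suc b)" using par tb by auto
      ultimately show "3 \<le> t - b" using tb(3) by linarith
    qed
  next
    assume "primary xs"
    then show "\<forall>b\<in>descent_bottoms xs. Suc b \<notin> descent_tops xs"
      unfolding primary_def by fastforce
  qed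
  finally show ?thesis .
qed

lemma LL_len_pos: "Q \<in> LL m \<Longrightarrow> length Q \<noteq> 0"
  by (simp add: LL_def valid_def)

lemma sum_single:
  assumes "\<And>Q. Q \<in> LL m \<Longrightarrow> length Q = 1 \<Longrightarrow> f Q = g (hd Q)"
  shows "(\<Sum>Q\<in>LL m. if length Q - 1 = 0 then f Q else 0) = (\<Sum>xs\<in>XX m. g xs)"
proof -
  have "(\<Sum>Q\<in>LL m. if length Q - 1 = 0 then f Q else 0) = (\<Sum>Q\<in>{Q\<in>LL m. length Q = 1}. f Q)"
    using finite_LL[of m] LL_len_pos[of _ m]
    by (subst sum.inter_filter) (auto intro!: sum.cong simp: le_Suc_eq)
  also have "{Q\<in>LL m. length Q = 1} = (\<lambda>xs. [xs]) ` XX m"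
  proof
    show "{Q \<in> LL m. length Q = 1} \<subseteq> (\<lambda>xs. [xs]) ` XX m"
    proof
      fix Q assume "Q \<in> {Q \<in> LL m. length Q = 1}"
      then obtain xs where "Q = [xs]" "[xs] \<in> LL m" by (cases Q) auto
      then show "Q \<in> (\<lambda>xs. [xs]) ` XX m" using single_LL by auto
    qed
  qed (use single_LL in auto)
  also have "(\<Sum>Q\<in>(\<lambda>xs. [xs]) ` XX m. f Q) = (\<Sum>xs\<in>XX m. f [xs])"
    by (subst sum.reindex) (auto simp: inj_on_def)
  also have "\<dots> = (\<Sum>xs\<in>XX m. g xs)"
    using assms single_LL by (intro sum.cong) auto
  finally show ?thesis .
qed

lemma Xpoly_ap: "Xpoly n = ap n 0"
proof -
  have "(\<Sum>Q\<in>LL (2 * n). Fw False (\<lambda>h. if h = 0 then 1 else 0) Q) = (\<Sum>h\<le>n. PP False n h * (if h = 0 then 1 else 0))"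
    by (rule comb_main)
  also have "\<dots> = (\<Sum>h\<le>n. if h = 0 then ap n h else 0)" by (intro sum.cong) (auto simp: PP_def)
  also have "\<dots> = ap n 0" by (subst sum.delta) auto
  finally have e: "(\<Sum>Q\<in>LL (2 * n). Fw False (\<lambda>h. if h = 0 then 1 else 0) Q) = ap n 0" .
  have "(\<Sum>Q\<in>LL (2 * n). Fw False (\<lambda>h. if h = 0 then 1 else 0) Q) = (\<Sum>Q\<in>LL (2 * n). if length Q - 1 = 0 then monom 1 (desQ Q) else 0)"
    by (intro sum.cong) (auto simp: Fw_def)
  also have "\<dots> = (\<Sum>xs\<in>XX (2 * n). monom 1 (des xs))"
    by (rule sum_single) (auto simp: desQ_def des_dc length_Suc_conv)
  finally show ?thesis using e by (simp add: Xpoly_def)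
qed

lemma finite_XX: "finite (XX m)"
proof -
  have "XX m = hd ` {Q\<in>LL m. length Q = 1}"
  proof
    show "XX m \<subseteq> hd ` {Q\<in>LL m. length Q = 1}"
      using single_LL by (auto intro!: image_eqI[where x = "[_]"])
  next
    show "hd ` {Q\<in>LL m. length Q = 1} \<subseteq> XX m"
      using single_LL by (auto simp: length_Suc_conv)
  qed
  then show ?thesis using finite_LL by simp
qed

lemma gp_primary: "gp n 0 = (\<Sum>xs\<in>{xs\<in>XX (2 * n). primary xs}. monom 1 (des xs))"
proof -
  have "(\<Sum>Q\<in>LL (2 * n). Fw True (\<lambda>h. if h = 0 then 1 else 0) Q) = (\<Sum>h\<le>n. PP True n h * (if h = 0 then 1 else 0))"
    by (rule comb_main)
  also have "\<dots> = (\<Sum>h\<le>n. if h = 0 then gp n h else 0)" by (intro sum.cong) (auto simp: PP_def)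
  also have "\<dots> = gp n 0" by (subst sum.delta) auto
  finally have e: "(\<Sum>Q\<in>LL (2 * n). Fw True (\<lambda>h. if h = 0 then 1 else 0) Q) = gp n 0" .
  have "(\<Sum>Q\<in>LL (2 * n). Fw True (\<lambda>h. if h = 0 then 1 else 0) Q) = (\<Sum>Q\<in>LL (2 * n). if length Q - 1 = 0 then (if pp Q then monom 1 (desQ Q) else 0) else 0)"
    by (intro sum.cong) (auto simp: Fw_def)
  also have "\<dots> = (\<Sum>xs\<in>XX (2 * n). if primary xs then monom 1 (des xs) else 0)"
  proof (rule sum_single)
    fix Q assume "Q \<in> LL (2 * n)" "length Q = 1"
    then obtain xs where "Q = [xs]" "xs \<in> XX (2 * n)" using single_LL by (auto simp: length_Suc_conv)
    then show "(if pp Q then monom 1 (desQ Q) else 0) = (if primary (hd Q) then monom 1 (des (hd Q)) else 0)"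
      using pp_single by (simp add: desQ_def des_dc)
  qed
  also have "\<dots> = (\<Sum>xs\<in>{xs\<in>XX (2 * n). primary xs}. monom 1 (des xs))"
    by (rule sum.inter_filter[symmetric]) (rule finite_XX)
  finally show ?thesis using e by simp
qed

lemma gamma_pc: "gamma n j = pc n 0 j"
proof -
  let ?A = "{xs\<in>XX (2 * n). primary xs}"
  have fA: "finite ?A" using finite_XX by simp
  have "coeff (gp n 0) j = (\<Sum>xs\<in>?A. coeff (monom 1 (des xs)) j)"
    unfolding gp_primary by (rule coeff_sum)
  also have "\<dots> = (\<Sum>xs\<in>?A. if des xs = j then 1 else 0)"
    by (intro sum.cong) (auto simp: coeff_monom)
  also have "\<dots> = of_nat (card {xs\<in>?A. des xs = j})"
    using fA by (simp add: sum.If_cases) (rule arg_cong[where f = card], auto)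
  also have "{xs\<in>?A. des xs = j} = {xs \<in> XX (2 * n). primary xs \<and> des xs = j}" by auto
  finally have a: "coeff (gp n 0) j = int (gamma n j)" by (simp add: gamma_def)
  have "coeff (gp n 0) j = (\<Sum>d\<le>n. of_nat (pc n 0 d) * coeff (monom 1 d) j)"
    unfolding gp_def coeff_sum by (intro sum.cong) (auto simp: of_nat_poly coeff_monom)
  also have "\<dots> = (\<Sum>d\<le>n. if d = j then int (pc n 0 d) else 0)"
    by (intro sum.cong) (auto simp: coeff_monom)
  also have "\<dots> = int (pc n 0 j)"
    using pc_zero[of n 0 j] by (subst sum.delta) auto
  finally show ?thesis using a by simp
qed

fun rf :: "real \<Rightarrow> nat \<Rightarrow> nat \<Rightarrow> nat \<Rightarrow> real" where
  "rf t b 0 g = (if g = b then 1 else 0)"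
| "rf t b (Suc k) g = (if g < b then 0 else
     real ((g + 1)^2) * rf t b k g + (if b < g then real (g * (g + 1)) * rf t b k (g - 1) else 0)
     + real ((g + 1) * (g + 2)) * t * rf t b k (g + 1))"

definition rr :: "real \<Rightarrow> nat \<Rightarrow> nat \<Rightarrow> real" where
  "rr t k h = (\<Sum>d\<le>k. real (pc k h d) * t ^ d)"

lemma rr_rec: "rr t (Suc k) h = real ((h + 1)^2) * rr t k h + real (h * (h + 1)) * rr t k (h - 1)
     + real ((h + 1) * (h + 2)) * t * rr t k (h + 1)"
proof -
  have e1: "(\<Sum>d\<le>Suc k. real (pc k h d) * t ^ d) = rr t k h"
    unfolding rr_def using pc_zero[of k h "Suc k"] by simp
  have e2: "(\<Sum>d\<le>Suc k. real (pc k (h - 1) d) * t ^ d) = rr t k (h - 1)"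
    unfolding rr_def using pc_zero[of k "h - 1" "Suc k"] by simp
  have e3: "(\<Sum>d\<le>Suc k. real (if d = 0 then 0 else pc k (h + 1) (d - 1)) * t ^ d) = t * rr t k (h + 1)"
  proof -
    have "(\<Sum>d\<le>Suc k. real (if d = 0 then 0 else pc k (h + 1) (d - 1)) * t ^ d)
       = (\<Sum>i\<le>k. real (pc k (h + 1) i) * t ^ Suc i)"
      by (simp only: sum.atMost_Suc_shift) simp
    also have "\<dots> = (\<Sum>i\<le>k. t * (real (pc k (h + 1) i) * t ^ i))"
      by (rule sum.cong[OF refl]) (simp only: power_Suc mult.left_commute)
    finally show ?thesis by (simp add: rr_def sum_distrib_left)
  qed
  have "rr t (Suc k) h = (\<Sum>d\<le>Suc k. real ((h + 1)^2) * (real (pc k h d) * t ^ d)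
      + real (h * (h + 1)) * (real (pc k (h - 1) d) * t ^ d)
      + real ((h + 1) * (h + 2)) * (real (if d = 0 then 0 else pc k (h + 1) (d - 1)) * t ^ d))"
    unfolding rr_def by (rule sum.cong[OF refl]) (subst pc.simps, simp only: of_nat_mult of_nat_add distrib_right mult.assoc)
  also have "\<dots> = real ((h + 1)^2) * rr t k h + real (h * (h + 1)) * rr t k (h - 1)
     + real ((h + 1) * (h + 2)) * (t * rr t k (h + 1))"
    unfolding sum.distrib sum_distrib_left[symmetric] e1 e2 e3 by simp
  finally show ?thesis by (simp only: mult.assoc)
qed

lemma rf0: "rf t 0 k h = rr t k h"
proof (induction k arbitrary: h)
  case 0 then show ?case by (simp add: rr_def)
next
  case (Suc k)
  show ?case unfolding rr_rec using Suc by (cases h) auto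
qed

lemma lastvisit: "Suc b \<le> g \<Longrightarrow>
   rf t b k g = (\<Sum>i<k. rf t b i b * real ((b + 1) * (b + 2)) * rf t (Suc b) (k - 1 - i) g)"
proof (induction k arbitrary: g)
  case 0 then show ?case by simp
next
  case (Suc k)
  let ?u = "real ((b + 1) * (b + 2))"
  define S where "S g' = (\<Sum>i<k. rf t b i b * ?u * rf t (Suc b) (k - 1 - i) g')" for g'
  have ih1: "rf t b k g = S g" using Suc by (simp add: S_def)
  have ih3: "rf t b k (g + 1) = S (g + 1)" using Suc.IH[of "g + 1"] Suc.prems by (simp add: S_def)
  have exp: "rf t (Suc b) (k - i) g = real ((g + 1)^2) * rf t (Suc b) (k - 1 - i) g
      + (if Suc b < g then real (g * (g + 1)) * rf t (Suc b) (k - 1 - i) (g - 1) else 0)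
      + real ((g + 1) * (g + 2)) * t * rf t (Suc b) (k - 1 - i) (g + 1)" if "i < k" for i
  proof -
    have "k - i = Suc (k - 1 - i)" using that by simp
    then show ?thesis using Suc.prems by simp
  qed
  have "(\<Sum>i<Suc k. rf t b i b * ?u * rf t (Suc b) (Suc k - 1 - i) g)
      = (\<Sum>i<k. rf t b i b * ?u * rf t (Suc b) (k - i) g) + rf t b k b * ?u * (if g = Suc b then 1 else 0)"
    by simp
  also have "(\<Sum>i<k. rf t b i b * ?u * rf t (Suc b) (k - i) g)
      = (\<Sum>i<k. real ((g + 1)^2) * (rf t b i b * ?u * rf t (Suc b) (k - 1 - i) g)
          + (if Suc b < g then real (g * (g + 1)) * (rf t b i b * ?u * rf t (Suc b) (k - 1 - i) (g - 1)) else 0)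
          + real ((g + 1) * (g + 2)) * t * (rf t b i b * ?u * rf t (Suc b) (k - 1 - i) (g + 1)))"
    by (rule sum.cong[OF refl]) (simp add: exp algebra_simps)
  also have "\<dots> = real ((g + 1)^2) * S g + (if Suc b < g then real (g * (g + 1)) * S (g - 1) else 0)
       + real ((g + 1) * (g + 2)) * t * S (g + 1)"
    unfolding S_def sum.distrib sum_distrib_left by (simp add: sum.If_cases if_distrib)
  finally have R: "(\<Sum>i<Suc k. rf t b i b * ?u * rf t (Suc b) (Suc k - 1 - i) g)
     = real ((g + 1)^2) * S g + (if Suc b < g then real (g * (g + 1)) * S (g - 1) else 0)
       + real ((g + 1) * (g + 2)) * t * S (g + 1) + rf t b k b * ?u * (if g = Suc b then 1 else 0)" .
  show ?case
  proof (cases "g = Suc b")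
    case True
    then show ?thesis unfolding R using ih1 ih3 by (simp add: algebra_simps)
  next
    case False
    then have gb: "Suc b < g" using Suc.prems by simp
    have ih2: "rf t b k (g - 1) = S (g - 1)" using Suc.IH[of "g - 1"] gb by (simp add: S_def)
    show ?thesis unfolding R using ih1 ih2 ih3 gb False by simp
  qed
qed


definition FF :: "real \<Rightarrow> nat \<Rightarrow> real fps" where
  "FF t b = Abs_fps (\<lambda>n. rf t b n b)"

lemma FF_eq: "FF t b * (1 - fps_const (mu b) * fps_X - fps_const (lam t (Suc b)) * fps_X ^ 2 * FF t (Suc b)) = 1"
proof (rule fps_ext)
  fix n
  let ?F = "FF t b" and ?G = "FF t (Suc b)"
  have e: "?F * (1 - fps_const (mu b) * fps_X - fps_const (lam t (Suc b)) * fps_X ^ 2 * ?G)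
      = ?F - fps_const (mu b) * (fps_X * ?F) - fps_const (lam t (Suc b)) * (fps_X ^ 2 * (?F * ?G))"
    by (simp add: algebra_simps)
  show "(?F * (1 - fps_const (mu b) * fps_X - fps_const (lam t (Suc b)) * fps_X ^ 2 * ?G)) $ n = 1 $ n"
  proof (cases n)
    case 0 then show ?thesis unfolding e by (simp add: FF_def)
  next
    case (Suc m)
    have r: "rf t b (Suc m) b = mu b * rf t b m b + real ((b + 1) * (b + 2)) * t * rf t b m (Suc b)"
      by (simp add: mu_def)
    have lv: "rf t b m (Suc b) = (\<Sum>i<m. rf t b i b * real ((b + 1) * (b + 2)) * rf t (Suc b) (m - 1 - i) (Suc b))"
      by (rule lastvisit) simp
    have c3: "(fps_X ^ 2 * (?F * ?G)) $ Suc m = (\<Sum>i<m. rf t b i b * rf t (Suc b) (m - 1 - i) (Suc b))"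
    proof (cases m)
      case 0 then show ?thesis by (simp add: fps_X_power_mult_nth)
    next
      case (Suc p)
      have "(fps_X ^ 2 * (?F * ?G)) $ Suc m = (?F * ?G) $ p" using Suc by (simp add: fps_X_power_mult_nth)
      also have "\<dots> = (\<Sum>i=0..p. rf t b i b * rf t (Suc b) (p - i) (Suc b))" by (simp add: fps_mult_nth FF_def)
      also have "\<dots> = (\<Sum>i<m. rf t b i b * rf t (Suc b) (m - 1 - i) (Suc b))"
        using Suc by (intro sum.cong) auto
      finally show ?thesis .
    qed
    have lm: "lam t (Suc b) = real ((b + 1) * (b + 2)) * t * real ((b + 1) * (b + 2))"
      by (simp add: lam_def power2_eq_square algebra_simps)
    have "rf t b (Suc m) b - mu b * rf t b m b - lam t (Suc b) * (\<Sum>i<m. rf t b i b * rf t (Suc b) (m - 1 - i) (Suc b)) = 0"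
      unfolding r lv lm sum_distrib_left by (simp add: algebra_simps)
    then show ?thesis unfolding e using Suc c3 by (simp add: FF_def fps_X_mult_nth)
  qed
qed

lemma FF_inv: "FF t b = inverse (1 - fps_const (mu b) * fps_X - fps_const (lam t (Suc b)) * fps_X ^ 2 * FF t (Suc b))"
proof -
  let ?D = "1 - fps_const (mu b) * fps_X - fps_const (lam t (Suc b)) * fps_X ^ 2 * FF t (Suc b)"
  have "?D * FF t b = 1" using FF_eq[of t b] by (simp add: mult.commute)
  then show ?thesis using fps_inverse_unique by metis
qed

lemma mult_nth_low: "(\<forall>i<M. E $ i = (0::real)) \<Longrightarrow> n < M \<Longrightarrow> (A * E) $ n = 0"
  by (simp add: fps_mult_nth)

lemma mult_nth_low': "(\<forall>i<M. E $ i = (0::real)) \<Longrightarrow> n < M \<Longrightarrow> (E * A) $ n = 0"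
  using mult_nth_low[of M E n A] by (simp add: mult.commute)

lemma inv_agree:
  fixes P Q :: "real fps"
  assumes "P $ 0 \<noteq> 0" "Q $ 0 \<noteq> 0" "\<forall>i<M. (P - Q) $ i = 0" "n < M"
  shows "inverse P $ n = inverse Q $ n"
proof -
  have "inverse Q - inverse P = inverse Q * (P - Q) * inverse P"
  proof -
    have "inverse Q * (P - Q) * inverse P = inverse Q * (P * inverse P) - (inverse Q * Q) * inverse P"
      by (simp add: algebra_simps)
    also have "\<dots> = inverse Q - inverse P"
      using inverse_mult_eq_1[OF assms(2)] inverse_mult_eq_1'[OF assms(1)] by simp
    finally show ?thesis by simp
  qed
  moreover have "\<forall>i<M. (inverse Q * (P - Q)) $ i = 0" using mult_nth_low[OF assms(3)] by blast
  then have "(inverse Q * (P - Q) * inverse P) $ n = 0" using mult_nth_low'[of M _ n] assms(4) by blast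
  ultimately show ?thesis by (metis diff_eq_eq fps_sub_nth add_0)
qed

lemma jconv_agree: "\<forall>b n. n < 2 * N \<longrightarrow> jconv t b N $ n = FF t b $ n"
proof (induction N)
  case 0 then show ?case by simp
next
  case (Suc N)
  show ?case
  proof (intro allI impI)
    fix b n assume n: "n < 2 * Suc N"
    let ?Dj = "1 - fps_const (mu b) * fps_X - fps_const (lam t (Suc b)) * fps_X ^ 2 * jconv t (Suc b) N"
    let ?D = "1 - fps_const (mu b) * fps_X - fps_const (lam t (Suc b)) * fps_X ^ 2 * FF t (Suc b)"
    have d: "?Dj - ?D = fps_const (lam t (Suc b)) * (fps_X ^ 2 * (FF t (Suc b) - jconv t (Suc b) N))"
      by (simp add: algebra_simps)
    have z: "\<forall>i<2 * Suc N. (?Dj - ?D) $ i = 0"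
    proof (intro allI impI)
      fix i assume i: "i < 2 * Suc N"
      have "(fps_X ^ 2 * (FF t (Suc b) - jconv t (Suc b) N)) $ i = 0"
        using Suc.IH i by (auto simp: fps_X_power_mult_nth)
      then show "(?Dj - ?D) $ i = 0" unfolding d by simp
    qed
    have "jconv t b (Suc N) $ n = inverse ?Dj $ n" by simp
    also have "\<dots> = inverse ?D $ n" by (rule inv_agree[OF _ _ z n]) simp_all
    also have "\<dots> = FF t b $ n" using FF_inv[of t b] by simp
    finally show "jconv t b (Suc N) $ n = FF t b $ n" .
  qed
qed

lemma jconv_coeff: "n < 2 * N \<Longrightarrow> jconv t 0 N $ n = (\<Sum>d\<le>n. real (pc n 0 d) * t ^ d)"
  using jconv_agree[of N t] rf0[of t n 0] by (simp add: FF_def rr_def)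

lemma sum_range_half:
  fixes f :: "nat \<Rightarrow> 'a::comm_monoid_add"
  assumes "\<And>d. n < 2 * d \<Longrightarrow> f d = 0"
  shows "(\<Sum>d\<le>n. f d) = (\<Sum>d=0..n div 2. f d)"
proof (rule sum.mono_neutral_right)
  show "finite {..n}" by simp
  show "{0..n div 2} \<subseteq> {..n}" by auto
  show "\<forall>i\<in>{..n} - {0..n div 2}. f i = 0" using assms by auto
qed

theorem mainTheorem1:
  shows "(\<forall>n \<ge> 1. Xpoly n =
            (\<Sum>j = 0..n div 2. of_nat (gamma n j) * monom 1 j * [:1, 1:] ^ (n - 2 * j)))
       \<and> (\<forall>t :: real. \<forall>n. \<exists>N0. \<forall>N \<ge> N0.
            fps_nth (jconv t 0 N) n = (\<Sum>j = 0..n div 2. real (gamma n j) * t ^ j))"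
proof (intro conjI allI impI)
  fix n :: nat
  have "Xpoly n = (\<Sum>d\<le>n. of_nat (pc n 0 d) * monom 1 d * [:1, 1:] ^ (n - 0 - 2 * d))"
    unfolding Xpoly_ap ap_def ..
  also have "\<dots> = (\<Sum>d=0..n div 2. of_nat (pc n 0 d) * monom 1 d * [:1, 1:] ^ (n - 0 - 2 * d))"
    by (rule sum_range_half) (simp add: pc_zero)
  also have "\<dots> = (\<Sum>j = 0..n div 2. of_nat (gamma n j) * monom 1 j * [:1, 1:] ^ (n - 2 * j))"
    by (simp add: gamma_pc)
  finally show "Xpoly n = (\<Sum>j = 0..n div 2. of_nat (gamma n j) * monom 1 j * [:1, 1:] ^ (n - 2 * j))" .
next
  fix t :: real and n :: nat
  show "\<exists>N0. \<forall>N \<ge> N0. fps_nth (jconv t 0 N) n = (\<Sum>j = 0..n div 2. real (gamma n j) * t ^ j)"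
  proof (intro exI allI impI)
    fix N assume N: "Suc n \<le> N"
    then have "n < 2 * N" by simp
    then have "fps_nth (jconv t 0 N) n = (\<Sum>d\<le>n. real (pc n 0 d) * t ^ d)" by (rule jconv_coeff)
    also have "\<dots> = (\<Sum>d=0..n div 2. real (pc n 0 d) * t ^ d)"
      by (rule sum_range_half) (simp add: pc_zero)
    also have "\<dots> = (\<Sum>j = 0..n div 2. real (gamma n j) * t ^ j)"
      by (simp add: gamma_pc)
    finally show "fps_nth (jconv t 0 N) n = (\<Sum>j = 0..n div 2. real (gamma n j) * t ^ j)" .
  qed
qed

end
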